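(* Let $m\geq 2$ and let $\mathbb{H}^m=(B^m,g)$ be the hyperbolic space, where $B^m$ is the open unit ball of $\mathbb{R}^m$ centred at $0$ and $g=4|dx|^2/(1-|x|^2)^2$ (constant sectional curvature $-1$). Let $r(x)=\log\left(\frac{1+|x|}{1-|x|}\right)$ be the $g$-distance from $x$ to $0$. For $c\in[1-m,m-1]$ define $f_c:\mathbb{H}^m\to\mathbb{R}$ by \[ f_c(x)=\int_0^{r(x)}\frac{A_c(s)}{\sqrt{1-A_c(s)^2}}\,ds,\qquad A_c(s)=\frac{c}{(\sinh s)^{m-1}}\int_0^s(\sinh t)^{m-1}\,dt . \] Then for each $c\in[1-m,m-1]$ the family $\{\Gamma_{f_c+d}(x):\ x\in\mathbb{H}^m,\ d\in\mathbb{R}\}$ defines a foliation of $\mathbb{H}^m\times\mathbb{R}$ (with the Riemannian product metric $g+dt^2$) by hypersurfaces $\Gamma_{f_c+d}$, $d\in\mathbb{R}$, each of constant mean curvature $c$, in the sense that $m\langle H,\nu\rangle=c$ (so $\|H\|=|c|/m$), where $H$ is the mean curvature vector of the graph and $\nu=\frac{(-\nabla f,1)}{\sqrt{1+\|\nabla f\|^2}}$ is its unit normal, $f=f_c+d$.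
   Context: For a map $f:M\to\mathbb{R}$, the graph is $\Gamma_f(x)=(x,f(x))$, and $\Gamma_f$ also denotes the image $\{(x,f(x))\}\subset M\times\mathbb{R}$. The mean curvature vector $H$ is the trace of the second fundamental form divided by the dimension $m$; $\nabla f$ is the $g$-gradient of $f$. *)

theory Defs
  imports "HOL-Analysis.Analysis"
begin

definition partial :: "(real^'n \<Rightarrow> real) \<Rightarrow> 'n \<Rightarrow> real^'n \<Rightarrow> real" where
  "partial \<phi> i x = deriv (\<lambda>t. \<phi> (x + t *\<^sub>R axis i 1)) 0"

fun partials :: "'n list \<Rightarrow> (real^'n \<Rightarrow> real) \<Rightarrow> real^'n \<Rightarrow> real" where
  "partials [] \<phi> = \<phi>"
| "partials (i # is) \<phi> = partial (partials is \<phi>) i"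

definition smooth_on :: "(real^'n) set \<Rightarrow> (real^'n \<Rightarrow> real) \<Rightarrow> bool" where
  "smooth_on U \<phi> \<longleftrightarrow>
     (\<forall>is. continuous_on U (partials is \<phi>) \<and>
        (\<forall>i. \<forall>x\<in>U. (\<lambda>t. partials is \<phi> (x + t *\<^sub>R axis i 1)) differentiable (at 0)))"

definition metric_inv :: "(real^'n \<Rightarrow> 'n \<Rightarrow> 'n \<Rightarrow> real) \<Rightarrow> real^'n \<Rightarrow> 'n \<Rightarrow> 'n \<Rightarrow> real" where
  "metric_inv G p i j = matrix_inv (\<chi> a b. G p a b) $ i $ j"

definition christoffel :: "(real^'n \<Rightarrow> 'n \<Rightarrow> 'n \<Rightarrow> real) \<Rightarrow> real^'n \<Rightarrow> 'n \<Rightarrow> 'n \<Rightarrow> 'n \<Rightarrow> real" where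
  "christoffel G p k i j = (1/2) * (\<Sum>l\<in>UNIV. metric_inv G p k l *
      (partial (\<lambda>q. G q l j) i p + partial (\<lambda>q. G q i l) j p - partial (\<lambda>q. G q i j) l p))"

definition metric_inner :: "(real^'n \<Rightarrow> 'n \<Rightarrow> 'n \<Rightarrow> real) \<Rightarrow> real^'n \<Rightarrow> real^'n \<Rightarrow> real^'n \<Rightarrow> real" where
  "metric_inner G p u v = (\<Sum>a\<in>UNIV. \<Sum>b\<in>UNIV. G p a b * u $ a * v $ b)"

definition hyp_metric :: "real^('m::finite) \<Rightarrow> 'm \<Rightarrow> 'm \<Rightarrow> real" where
  "hyp_metric x i j = (if i = j then 4 / (1 - (norm x)\<^sup>2)\<^sup>2 else 0)"

text \<open>Ambient coordinates on B^m x R: index Some i for the ball, None for the R-factor.\<close>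
definition base_pt :: "real^(('m::finite) option) \<Rightarrow> real^('m::finite)" where
  "base_pt p = (\<chi> i. p $ Some i)"

definition prod_metric :: "real^(('m::finite) option) \<Rightarrow> ('m::finite) option \<Rightarrow> ('m::finite) option \<Rightarrow> real" where
  "prod_metric p a b =
     (case (a, b) of (Some i, Some j) \<Rightarrow> hyp_metric (base_pt p) i j
                   | (None, None) \<Rightarrow> 1
                   | _ \<Rightarrow> 0)"

definition hyp_r :: "real^('m::finite) \<Rightarrow> real" where
  "hyp_r x = ln ((1 + norm x) / (1 - norm x))"

definition A_fun :: "nat \<Rightarrow> real \<Rightarrow> real \<Rightarrow> real" where
  "A_fun m c s = c / (sinh s) ^ (m - 1) * integral {0..s} (\<lambda>t. (sinh t) ^ (m - 1))"

definition f_fun :: "nat \<Rightarrow> real \<Rightarrow> real^('m::finite) \<Rightarrow> real" where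
  "f_fun m c x = integral {0..hyp_r x} (\<lambda>s. A_fun m c s / sqrt (1 - (A_fun m c s)\<^sup>2))"

definition graph_map :: "(real^('m::finite) \<Rightarrow> real) \<Rightarrow> real^('m::finite) \<Rightarrow> real^(('m::finite) option)" where
  "graph_map f x = (\<chi> a. case a of Some i \<Rightarrow> x $ i | None \<Rightarrow> f x)"

definition graph_set :: "(real^('m::finite) \<Rightarrow> real) \<Rightarrow> (real^(('m::finite) option)) set" where
  "graph_set f = graph_map f ` ball 0 1"

definition dgraph :: "(real^('m::finite) \<Rightarrow> real) \<Rightarrow> 'm \<Rightarrow> real^('m::finite) \<Rightarrow> real^(('m::finite) option)" where
  "dgraph f i x = (\<chi> a. partial (\<lambda>y. graph_map f y $ a) i x)"

definition ddgraph :: "(real^('m::finite) \<Rightarrow> real) \<Rightarrow> 'm \<Rightarrow> 'm \<Rightarrow> real^('m::finite) \<Rightarrow> real^(('m::finite) option)" where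
  "ddgraph f i j x = (\<chi> a. partial (\<lambda>y. partial (\<lambda>z. graph_map f z $ a) j y) i x)"

definition ind_metric :: "(real^('m::finite) \<Rightarrow> real) \<Rightarrow> real^('m::finite) \<Rightarrow> 'm \<Rightarrow> 'm \<Rightarrow> real" where
  "ind_metric f x i j = metric_inner prod_metric (graph_map f x) (dgraph f i x) (dgraph f j x)"

definition hyp_grad :: "(real^('m::finite) \<Rightarrow> real) \<Rightarrow> real^('m::finite) \<Rightarrow> real^('m::finite)" where
  "hyp_grad f x = (\<chi> k. \<Sum>l\<in>UNIV. metric_inv hyp_metric x k l * partial f l x)"

definition hyp_grad_norm :: "(real^('m::finite) \<Rightarrow> real) \<Rightarrow> real^('m::finite) \<Rightarrow> real" where
  "hyp_grad_norm f x = sqrt (metric_inner hyp_metric x (hyp_grad f x) (hyp_grad f x))"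

definition graph_normal :: "(real^('m::finite) \<Rightarrow> real) \<Rightarrow> real^('m::finite) \<Rightarrow> real^(('m::finite) option)" where
  "graph_normal f x = (1 / sqrt (1 + (hyp_grad_norm f x)\<^sup>2)) *\<^sub>R
      (\<chi> a. case a of Some k \<Rightarrow> - (hyp_grad f x $ k) | None \<Rightarrow> 1)"

definition amb_cov :: "(real^('m::finite) \<Rightarrow> real) \<Rightarrow> 'm \<Rightarrow> 'm \<Rightarrow> real^('m::finite) \<Rightarrow> real^(('m::finite) option)" where
  "amb_cov f i j x = (\<chi> a. ddgraph f i j x $ a +
      (\<Sum>b\<in>UNIV. \<Sum>c\<in>UNIV. christoffel prod_metric (graph_map f x) a b c
                         * dgraph f i x $ b * dgraph f j x $ c))"

text \<open>Vector-valued second fundamental form: normal component of nabla-bar_{d_i} d_j Gamma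
  (the normal space is spanned by the unit normal nu).\<close>
definition sff :: "(real^('m::finite) \<Rightarrow> real) \<Rightarrow> 'm \<Rightarrow> 'm \<Rightarrow> real^('m::finite) \<Rightarrow> real^(('m::finite) option)" where
  "sff f i j x = metric_inner prod_metric (graph_map f x) (amb_cov f i j x) (graph_normal f x)
                  *\<^sub>R graph_normal f x"

definition mean_curv_vec :: "(real^('m::finite) \<Rightarrow> real) \<Rightarrow> real^('m::finite) \<Rightarrow> real^(('m::finite) option)" where
  "mean_curv_vec f x = (1 / real CARD('m)) *\<^sub>R
     (\<Sum>i\<in>UNIV. \<Sum>j\<in>UNIV. metric_inv (ind_metric f) x i j *\<^sub>R sff f i j x)"

end

theory Submission
  imports Defs
begin


definition dclosed :: "real set \<Rightarrow> (real \<Rightarrow> real) set \<Rightarrow> bool" where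
  "dclosed S F \<longleftrightarrow> (\<forall>h\<in>F. \<exists>h'\<in>F. \<forall>x\<in>S. (h has_real_derivative h' x) (at x))"

definition smooth1 :: "real set \<Rightarrow> (real \<Rightarrow> real) \<Rightarrow> bool" where
  "smooth1 S h \<longleftrightarrow> (\<exists>F. dclosed S F \<and> h \<in> F)"

lemma smooth1I: "dclosed S F \<Longrightarrow> h \<in> F \<Longrightarrow> smooth1 S h"
  unfolding smooth1_def by blast

lemma smooth1_D:
  assumes "smooth1 S h"
  shows "\<exists>h'. smooth1 S h' \<and> (\<forall>x\<in>S. (h has_real_derivative h' x) (at x))"
  using assms unfolding smooth1_def dclosed_def by blast

lemma dclosed_smooth1: "dclosed S {h. smooth1 S h}"
  unfolding dclosed_def using smooth1_D by blast

lemma smooth1_cong: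
  assumes "smooth1 S h" "open S" "\<And>x. x \<in> S \<Longrightarrow> h x = k x"
  shows "smooth1 S k"
proof -
  have "dclosed S ({h. smooth1 S h} \<union> {k})"
    unfolding dclosed_def
  proof (intro ballI)
    fix g assume g: "g \<in> {h. smooth1 S h} \<union> {k}"
    show "\<exists>h'\<in>{h. smooth1 S h} \<union> {k}. \<forall>x\<in>S. (g has_real_derivative h' x) (at x)"
    proof (cases "g = k")
      case True
      obtain h' where h': "smooth1 S h'" "\<And>x. x \<in> S \<Longrightarrow> (h has_real_derivative h' x) (at x)"
        using smooth1_D[OF assms(1)] by blast
      have "\<forall>x\<in>S. (k has_real_derivative h' x) (at x)"
      proof
        fix x assume x: "x \<in> S"
        have ev: "\<forall>\<^sub>F y in nhds x. h y = k y"
          using assms(2,3) x eventually_nhds by blast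
        show "(k has_real_derivative h' x) (at x)"
          using h'(2)[OF x] DERIV_cong_ev[OF refl ev refl] assms(3)[OF x] by simp
      qed
      then show ?thesis using h' True by blast
    next
      case False
      then have "smooth1 S g" using g by auto
      then obtain h' where "smooth1 S h'" "\<And>x. x \<in> S \<Longrightarrow> (g has_real_derivative h' x) (at x)"
        using smooth1_D[OF \<open>smooth1 S g\<close>] by blast
      then show ?thesis by blast
    qed
  qed
  then show ?thesis by (rule smooth1I) simp
qed

inductive_set algcl :: "real set \<Rightarrow> real set \<Rightarrow> (real \<Rightarrow> real) \<Rightarrow> (real \<Rightarrow> real) set"
  for S T k where
  base: "smooth1 S a \<Longrightarrow> a \<in> algcl S T k"
| comp: "smooth1 T h \<Longrightarrow> (\<lambda>x. h (k x)) \<in> algcl S T k"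
| mult: "a \<in> algcl S T k \<Longrightarrow> b \<in> algcl S T k \<Longrightarrow> (\<lambda>x. a x * b x) \<in> algcl S T k"
| add: "a \<in> algcl S T k \<Longrightarrow> b \<in> algcl S T k \<Longrightarrow> (\<lambda>x. a x + b x) \<in> algcl S T k"

lemma dclosed_algcl:
  assumes k: "smooth1 S k" and kST: "\<And>x. x \<in> S \<Longrightarrow> k x \<in> T"
  shows "dclosed S (algcl S T k)"
  unfolding dclosed_def
proof
  fix g assume "g \<in> algcl S T k"
  then show "\<exists>h'\<in>algcl S T k. \<forall>x\<in>S. (g has_real_derivative h' x) (at x)"
  proof induction
    case (base a)
    then obtain a' where "smooth1 S a'" "\<And>x. x \<in> S \<Longrightarrow> (a has_real_derivative a' x) (at x)"
      using smooth1_D[OF base] by blast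
    then show ?case by (intro bexI[of _ a'] algcl.base) auto
  next
    case (comp h)
    obtain h' where h': "smooth1 T h'" "\<And>x. x \<in> T \<Longrightarrow> (h has_real_derivative h' x) (at x)"
      using smooth1_D[OF comp] by blast
    obtain k' where k': "smooth1 S k'" "\<And>x. x \<in> S \<Longrightarrow> (k has_real_derivative k' x) (at x)"
      using smooth1_D[OF k] by blast
    have "(\<lambda>x. h' (k x) * k' x) \<in> algcl S T k"
      by (intro algcl.mult algcl.comp algcl.base h' k')
    moreover have "\<forall>x\<in>S. ((\<lambda>x. h (k x)) has_real_derivative h' (k x) * k' x) (at x)"
      using DERIV_chain2[OF h'(2)[OF kST] k'(2)] by blast
    ultimately show ?case by (intro bexI[of _ "\<lambda>x. h' (k x) * k' x"]) auto
  next
    case (mult a b)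
    then obtain a' b' where a': "a' \<in> algcl S T k" "\<forall>x\<in>S. (a has_real_derivative a' x) (at x)"
      and b': "b' \<in> algcl S T k" "\<forall>x\<in>S. (b has_real_derivative b' x) (at x)" by blast
    have "(\<lambda>x. a' x * b x + a x * b' x) \<in> algcl S T k"
      by (intro algcl.mult algcl.add a' b' mult)
    moreover have "\<forall>x\<in>S. ((\<lambda>x. a x * b x) has_real_derivative a' x * b x + a x * b' x) (at x)"
      using a' b' by (auto intro!: derivative_eq_intros)
    ultimately show ?case by (intro bexI[of _ "\<lambda>x. a' x * b x + a x * b' x"]) auto
  next
    case (add a b)
    then obtain a' b' where a': "a' \<in> algcl S T k" "\<forall>x\<in>S. (a has_real_derivative a' x) (at x)"
      and b': "b' \<in> algcl S T k" "\<forall>x\<in>S. (b has_real_derivative b' x) (at x)" by blast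
    have "(\<lambda>x. a' x + b' x) \<in> algcl S T k"
      by (intro algcl.add a' b')
    moreover have "\<forall>x\<in>S. ((\<lambda>x. a x + b x) has_real_derivative a' x + b' x) (at x)"
      using a' b' by (auto intro!: derivative_eq_intros)
    ultimately show ?case by (intro bexI[of _ "\<lambda>x. a' x + b' x"]) auto
  qed
qed

lemma smooth1_const: "smooth1 S (\<lambda>x. a)"
proof -
  have "dclosed S {\<lambda>x. b | b. True}"
    unfolding dclosed_def by (auto intro!: exI[of _ 0])
  then show ?thesis by (rule smooth1I) blast
qed

lemma smooth1_id: "smooth1 S (\<lambda>x. x)"
proof -
  have "dclosed S ({\<lambda>x. x} \<union> {\<lambda>x. b | b. True})"
    unfolding dclosed_def
    by (auto intro!: bexI[of _ "\<lambda>x. 1"] bexI[of _ "\<lambda>x. 0"] derivative_eq_intros)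
  then show ?thesis by (rule smooth1I) auto
qed

lemma dclosed_algcl_id: "dclosed S (algcl S S (\<lambda>x. x))"
  by (rule dclosed_algcl[OF smooth1_id])

lemma smooth1_mult: assumes "smooth1 S a" "smooth1 S b" shows "smooth1 S (\<lambda>x. a x * b x)"
proof -
  have "(\<lambda>x. a x * b x) \<in> algcl S S (\<lambda>x. x)"
    using assms by (intro algcl.mult algcl.base)
  then show ?thesis by (rule smooth1I[OF dclosed_algcl_id])
qed

lemma smooth1_add: assumes "smooth1 S a" "smooth1 S b" shows "smooth1 S (\<lambda>x. a x + b x)"
proof -
  have "(\<lambda>x. a x + b x) \<in> algcl S S (\<lambda>x. x)"
    using assms by (intro algcl.add algcl.base)
  then show ?thesis by (rule smooth1I[OF dclosed_algcl_id])
qed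

lemma smooth1_compose:
  assumes "smooth1 T h" "smooth1 S k" "\<And>x. x \<in> S \<Longrightarrow> k x \<in> T"
  shows "smooth1 S (\<lambda>x. h (k x))"
proof -
  have "(\<lambda>x. h (k x)) \<in> algcl S T k"
    using assms(1) by (rule algcl.comp)
  then show ?thesis using smooth1I dclosed_algcl assms(2,3) by blast
qed

lemma smooth1_powr: "smooth1 {0<..} (\<lambda>x. x powr b)"
proof -
  have "dclosed {0<..} {\<lambda>x. a * x powr b | a b. True}"
    unfolding dclosed_def
  proof (clarify)
    fix a b
    have "\<forall>x\<in>{0<..}. ((\<lambda>x. a * x powr b) has_real_derivative (a * b) * x powr (b - 1)) (at x)"
      by (auto intro!: derivative_eq_intros)
    then show "\<exists>h'\<in>{\<lambda>x. a * x powr b |a b. True}. \<forall>x\<in>{0<..}. ((\<lambda>x. a * x powr b) has_real_derivative h' x) (at x)"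
      by (intro bexI[of _ "\<lambda>x. (a * b) * x powr (b - 1)"]) auto
  qed
  moreover have "(\<lambda>x. x powr b) \<in> {\<lambda>x. a * x powr b | a b. True}"
    by (rule CollectI, rule exI[of _ 1], rule exI[of _ b]) simp
  ultimately show ?thesis by (rule smooth1I)
qed


lemma ev_line_in_open:
  fixes x :: "'a::real_normed_vector"
  assumes "open U" "x \<in> U"
  shows "\<forall>\<^sub>F t in nhds (0::real). x + t *\<^sub>R v \<in> U"
proof -
  have "open ((\<lambda>t::real. x + t *\<^sub>R v) -` U)"
    by (rule continuous_open_vimage[OF assms(1)]) (intro continuous_intros)
  moreover have "0 \<in> (\<lambda>t::real. x + t *\<^sub>R v) -` U" using assms(2) by simp
  ultimately show ?thesis
    by (rule eventually_nhds_in_open[THEN eventually_mono]) simp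
qed

lemma partial_eqI:
  "((\<lambda>t. \<phi> (x + t *\<^sub>R axis i 1)) has_real_derivative D) (at 0) \<Longrightarrow> partial \<phi> i x = D"
  unfolding partial_def by (rule DERIV_imp_deriv)

lemma partial_cong:
  assumes "open U" "x \<in> U" "\<And>y. y \<in> U \<Longrightarrow> \<phi> y = \<psi> y"
  shows "partial \<phi> i x = partial \<psi> i x"
  unfolding partial_def
  by (rule deriv_cong_ev[OF eventually_mono[OF ev_line_in_open[OF assms(1,2), of "axis i 1"]] refl]) (simp add: assms(3))

lemma line_deriv_cong:
  fixes x :: "'a::real_normed_vector"
  assumes "open U" "x \<in> U" "\<And>y. y \<in> U \<Longrightarrow> \<phi> y = \<psi> y"
  shows "((\<lambda>t. \<phi> (x + t *\<^sub>R v)) has_real_derivative D) (at 0) \<longleftrightarrow>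
         ((\<lambda>t. \<psi> (x + t *\<^sub>R v)) has_real_derivative D) (at 0)"
  by (rule DERIV_cong_ev[OF refl eventually_mono[OF ev_line_in_open[OF assms(1,2), of v]] refl]) (simp add: assms(3))

lemma norm_line_sq:
  fixes x :: "real^'m"
  shows "norm (x + t *\<^sub>R axis i 1) ^ 2 = norm x ^ 2 + 2 * t * x $ i + t ^ 2"
proof -
  have "norm (x + t *\<^sub>R axis i 1) ^ 2 = (x + t *\<^sub>R axis i 1) \<bullet> (x + t *\<^sub>R axis i 1)"
    by (simp add: dot_square_norm)
  also have "\<dots> = x \<bullet> x + 2 * t * (x \<bullet> axis i 1) + t^2 * (axis i 1 \<bullet> axis i (1::real))"
    by (simp add: inner_add_left inner_add_right inner_commute algebra_simps power2_eq_square)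
  also have "\<dots> = norm x ^ 2 + 2 * t * x $ i + t ^ 2"
    by (simp add: dot_square_norm inner_axis)
  finally show ?thesis .
qed

lemma line_deriv_normsq:
  fixes x :: "real^'m"
  shows "((\<lambda>t. norm (x + t *\<^sub>R axis i 1) ^ 2) has_real_derivative 2 * x $ i) (at 0)"
proof -
  have "((\<lambda>t. norm x ^ 2 + 2 * t * x $ i + t ^ 2) has_real_derivative 2 * x $ i) (at 0)"
    by (auto intro!: derivative_eq_intros)
  then show ?thesis by (simp add: norm_line_sq)
qed

lemma line_deriv_rad:
  fixes x :: "real^'m"
  assumes "(h has_real_derivative h1) (at (norm x ^ 2))"
  shows "((\<lambda>t. h (norm (x + t *\<^sub>R axis i 1) ^ 2)) has_real_derivative h1 * (2 * x $ i)) (at 0)"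
proof -
  have d: "(h has_real_derivative h1) (at (norm (x + 0 *\<^sub>R axis i 1) ^ 2))" using assms by simp
  show ?thesis using DERIV_chain2[OF d line_deriv_normsq] by simp
qed

lemma partial_rad:
  fixes x :: "real^'m"
  assumes "(h has_real_derivative h1) (at (norm x ^ 2))"
  shows "partial (\<lambda>y. h (norm y ^ 2)) i x = h1 * (2 * x $ i)"
  by (rule partial_eqI, rule line_deriv_rad[OF assms])

lemma line_deriv_coord:
  fixes x :: "real^'m"
  shows "((\<lambda>t. (x + t *\<^sub>R axis i 1) $ k) has_real_derivative (if k = i then 1 else 0)) (at 0)"
proof -
  have "((\<lambda>t. x $ k + t * (if k = i then 1 else 0)) has_real_derivative (if k = i then 1 else 0)) (at 0)"
    by (auto intro!: derivative_eq_intros)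
  then show ?thesis by (simp add: axis_def)
qed

lemma partial_coord:
  fixes x :: "real^'m"
  shows "partial (\<lambda>y. y $ k) i x = (if k = i then 1 else 0)"
  by (rule partial_eqI, rule line_deriv_coord)

lemma partial_const: "partial (\<lambda>y. a) i x = 0"
  unfolding partial_def by simp

inductive_set msm :: "real set \<Rightarrow> (real^'m \<Rightarrow> real) set" for T where
  coord: "(\<lambda>x. x $ k) \<in> msm T"
| rad: "smooth1 T h \<Longrightarrow> (\<lambda>x. h (norm x ^ 2)) \<in> msm T"
| mult: "a \<in> msm T \<Longrightarrow> b \<in> msm T \<Longrightarrow> (\<lambda>x. a x * b x) \<in> msm T"
| add: "a \<in> msm T \<Longrightarrow> b \<in> msm T \<Longrightarrow> (\<lambda>x. a x + b x) \<in> msm T"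

lemma smooth1_continuous_on:
  assumes "smooth1 T h" shows "continuous_on T h"
proof -
  obtain h' where "\<forall>x\<in>T. (h has_real_derivative h' x) (at x)"
    using smooth1_D[OF assms] by blast
  then show ?thesis
    by (meson DERIV_isCont continuous_at_imp_continuous_on)
qed

lemma msm_props:
  assumes T: "{0..<1} \<subseteq> T"
    and phi: "\<phi> \<in> msm T"
  shows "continuous_on (ball (0::real^'m) 1) \<phi> \<and>
    (\<forall>i. \<exists>\<psi>\<in>msm T. \<forall>x\<in>ball 0 1. ((\<lambda>t. \<phi> (x + t *\<^sub>R axis i 1)) has_real_derivative \<psi> x) (at 0))"
  using phi
proof induction
  case (coord k)
  have "continuous_on (ball (0::real^'m) 1) (\<lambda>x. x $ k)"
    by (intro continuous_intros)
  moreover have "\<exists>\<psi>\<in>msm T. \<forall>x\<in>ball (0::real^'m) 1. ((\<lambda>t. (x + t *\<^sub>R axis i 1) $ k) has_real_derivative \<psi> x) (at 0)" for i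
  proof -
    have "smooth1 T (\<lambda>_. if k = i then 1 else 0)" by (rule smooth1_const)
    then have "(\<lambda>x::real^'m. (\<lambda>_. if k = i then 1 else 0) (norm x ^ 2)) \<in> msm T" by (rule msm.rad)
    then show ?thesis using line_deriv_coord[of _ i k] by (intro bexI) auto
  qed
  ultimately show ?case by blast
next
  case (rad h)
  have nT: "norm x ^ 2 \<in> T" if "x \<in> ball (0::real^'m) 1" for x
  proof -
    have "norm x < 1" using that by simp
    then have "norm x ^ 2 < 1" by (simp add: power_less_one_iff abs_square_less_1)
    then show ?thesis using T by auto
  qed
  have "continuous_on (ball (0::real^'m) 1) (\<lambda>x. h (norm x ^ 2))"
    by (rule continuous_on_compose2[OF smooth1_continuous_on[OF rad]]) (auto intro!: continuous_intros nT)
  moreover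
  obtain h' where h': "smooth1 T h'" "\<forall>x\<in>T. (h has_real_derivative h' x) (at x)"
    using smooth1_D[OF rad] by blast
  have "\<exists>\<psi>\<in>msm T. \<forall>x\<in>ball (0::real^'m) 1. ((\<lambda>t. h (norm (x + t *\<^sub>R axis i 1) ^ 2)) has_real_derivative \<psi> x) (at 0)" for i
  proof -
    have "(\<lambda>x::real^'m. h' (norm x ^ 2) * ((\<lambda>_. 2) (norm x ^ 2) * x $ i)) \<in> msm T"
      by (intro msm.intros h' smooth1_const)
    moreover have "\<forall>x\<in>ball (0::real^'m) 1. ((\<lambda>t. h (norm (x + t *\<^sub>R axis i 1) ^ 2)) has_real_derivative h' (norm x ^ 2) * ((\<lambda>_. 2) (norm x ^ 2) * x $ i)) (at 0)"
    proof
      fix x :: "real^'m" assume x: "x \<in> ball 0 1"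
      show "((\<lambda>t. h (norm (x + t *\<^sub>R axis i 1) ^ 2)) has_real_derivative h' (norm x ^ 2) * ((\<lambda>_. 2) (norm x ^ 2) * x $ i)) (at 0)"
        using line_deriv_rad[OF h'(2)[rule_format, OF nT[OF x]]] by simp
    qed
    ultimately show ?thesis by (intro bexI) auto
  qed
  ultimately show ?case by blast
next
  case (mult a b)
  then show ?case
  proof (intro conjI allI)
    show "continuous_on (ball 0 1) (\<lambda>x. a x * b x)" using mult by (auto intro!: continuous_intros)
    fix i
    obtain a' b' where a': "a' \<in> msm T" "\<forall>x\<in>ball 0 1. ((\<lambda>t. a (x + t *\<^sub>R axis i 1)) has_real_derivative a' x) (at 0)"
      and b': "b' \<in> msm T" "\<forall>x\<in>ball 0 1. ((\<lambda>t. b (x + t *\<^sub>R axis i 1)) has_real_derivative b' x) (at 0)"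
      using mult by blast
    have "(\<lambda>x. a' x * b x + a x * b' x) \<in> msm T"
      by (intro msm.intros a' b' mult)
    moreover have "\<forall>x\<in>ball 0 1. ((\<lambda>t. a (x + t *\<^sub>R axis i 1) * b (x + t *\<^sub>R axis i 1)) has_real_derivative a' x * b x + a x * b' x) (at 0)"
      using a' b' by (auto intro!: derivative_eq_intros)
    ultimately show "\<exists>\<psi>\<in>msm T. \<forall>x\<in>ball 0 1. ((\<lambda>t. a (x + t *\<^sub>R axis i 1) * b (x + t *\<^sub>R axis i 1)) has_real_derivative \<psi> x) (at 0)"
      by (intro bexI[of _ "\<lambda>x. a' x * b x + a x * b' x"]) auto
  qed
next
  case (add a b)
  then show ?case
  proof (intro conjI allI)
    show "continuous_on (ball 0 1) (\<lambda>x. a x + b x)" using add by (auto intro!: continuous_intros)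
    fix i
    obtain a' b' where a': "a' \<in> msm T" "\<forall>x\<in>ball 0 1. ((\<lambda>t. a (x + t *\<^sub>R axis i 1)) has_real_derivative a' x) (at 0)"
      and b': "b' \<in> msm T" "\<forall>x\<in>ball 0 1. ((\<lambda>t. b (x + t *\<^sub>R axis i 1)) has_real_derivative b' x) (at 0)"
      using add by blast
    have "(\<lambda>x. a' x + b' x) \<in> msm T"
      by (intro msm.intros a' b')
    moreover have "\<forall>x\<in>ball 0 1. ((\<lambda>t. a (x + t *\<^sub>R axis i 1) + b (x + t *\<^sub>R axis i 1)) has_real_derivative a' x + b' x) (at 0)"
      using a' b' by (auto intro!: derivative_eq_intros)
    ultimately show "\<exists>\<psi>\<in>msm T. \<forall>x\<in>ball 0 1. ((\<lambda>t. a (x + t *\<^sub>R axis i 1) + b (x + t *\<^sub>R axis i 1)) has_real_derivative \<psi> x) (at 0)"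
      by (intro bexI[of _ "\<lambda>x. a' x + b' x"]) auto
  qed
qed

lemma msm_smooth_on:
  assumes T: "{0..<1} \<subseteq> T" and phi: "\<phi> \<in> msm T"
  shows "smooth_on (ball (0::real^'m) 1) \<phi>"
proof -
  have ex: "\<exists>\<psi>\<in>msm T. \<forall>x\<in>ball 0 1. partials is \<phi> x = \<psi> x" for "is"
  proof (induction "is")
    case Nil
    then show ?case using phi by auto
  next
    case (Cons i "is")
    then obtain \<psi> where psi: "\<psi> \<in> msm T" "\<forall>x\<in>ball 0 1. partials is \<phi> x = \<psi> x" by blast
    obtain \<psi>' where psi': "\<psi>' \<in> msm T" "\<forall>x\<in>ball 0 1. ((\<lambda>t. \<psi> (x + t *\<^sub>R axis i 1)) has_real_derivative \<psi>' x) (at 0)"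
      using msm_props[OF T psi(1)] by blast
    have "partials (i # is) \<phi> x = \<psi>' x" if x: "x \<in> ball 0 1" for x
    proof -
      have "partials (i # is) \<phi> x = partial \<psi> i x"
        using partial_cong[of "ball 0 1" x "partials is \<phi>" \<psi> i] x psi(2) by simp
      also have "\<dots> = \<psi>' x" using partial_eqI psi'(2) x by blast
      finally show ?thesis .
    qed
    then show ?case using psi' by blast
  qed
  show ?thesis
    unfolding smooth_on_def
  proof (intro allI conjI ballI)
    fix "is"
    obtain \<psi> where psi: "\<psi> \<in> msm T" "\<forall>x\<in>ball 0 1. partials is \<phi> x = \<psi> x" using ex by blast
    show "continuous_on (ball 0 1) (partials is \<phi>)"
      using msm_props[OF T psi(1)] psi(2) continuous_on_cong by (metis (no_types, lifting))
    fix i x assume x: "x \<in> ball (0::real^'m) 1"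
    obtain \<psi>' where "((\<lambda>t. \<psi> (x + t *\<^sub>R axis i 1)) has_real_derivative \<psi>' x) (at 0)"
      using msm_props[OF T psi(1)] x by blast
    then have "((\<lambda>t. partials is \<phi> (x + t *\<^sub>R axis i 1)) has_real_derivative \<psi>' x) (at 0)"
      using line_deriv_cong[of "ball 0 1" x "partials is \<phi>" \<psi>] x psi(2) by simp
    then show "(\<lambda>t. partials is \<phi> (x + t *\<^sub>R axis i 1)) differentiable at 0"
      using real_differentiable_def differentiableI by blast
  qed
qed


lemma dclosed_mono: "dclosed S F \<Longrightarrow> S' \<subseteq> S \<Longrightarrow> dclosed S' F"
  unfolding dclosed_def by blast

lemma smooth1_mono: "smooth1 S h \<Longrightarrow> S' \<subseteq> S \<Longrightarrow> smooth1 S' h"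
  unfolding smooth1_def using dclosed_mono by blast

lemma w_pos:
  fixes \<sigma> \<tau> :: real
  assumes "\<sigma> > -1" "0 \<le> \<tau>" "\<tau> \<le> 1"
  shows "2 + (\<sigma> - 1) * \<tau> > 0"
proof (cases "\<sigma> \<ge> 1")
  case True then show ?thesis using assms by (simp add: add_pos_nonneg)
next
  case False
  then have "(\<sigma> - 1) * (\<tau> - 1) \<ge> 0" using assms by (intro mult_nonpos_nonpos) auto
  then show ?thesis using assms by (simp add: algebra_simps)
qed

definition Kint :: "nat \<Rightarrow> real \<Rightarrow> nat \<Rightarrow> real \<Rightarrow> real" where
  "Kint m C n \<sigma> = integral {0..1} (\<lambda>\<tau>. C * (sqrt \<tau> ^ (m - 2) * \<tau> ^ n) * (2 + (\<sigma> - 1) * \<tau>) powr ((real m - 2) / 2 - real n))"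

lemma Kint_deriv:
  assumes "\<sigma> > -1"
  shows "(Kint m C n has_real_derivative Kint m (C * ((real m - 2) / 2 - real n)) (Suc n) \<sigma>) (at \<sigma>)"
proof -
  define p where "p = (real m - 2) / 2"
  let ?U = "{-1<..} :: real set"
  let ?f = "\<lambda>\<sigma> \<tau>. C * (sqrt \<tau> ^ (m - 2) * \<tau> ^ n) * (2 + (\<sigma> - 1) * \<tau>) powr (p - real n)"
  let ?fx = "\<lambda>\<sigma> \<tau>. (C * (p - real n)) * (sqrt \<tau> ^ (m - 2) * \<tau> ^ Suc n) * (2 + (\<sigma> - 1) * \<tau>) powr (p - real (Suc n))"
  have "((\<lambda>\<sigma>. integral (cbox 0 1) (?f \<sigma>)) has_field_derivative integral (cbox 0 1) (?fx \<sigma>)) (at \<sigma> within ?U)"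
  proof (rule leibniz_rule_field_derivative)
    fix x t assume x: "x \<in> ?U" and t: "t \<in> cbox (0::real) 1"
    have wp: "2 + (x - 1) * t > 0" using w_pos x t by auto
    have "((\<lambda>\<sigma>. ?f \<sigma> t) has_real_derivative
        C * (sqrt t ^ (m - 2) * t ^ n) * ((p - real n) * (2 + (x - 1) * t) powr (p - real n - 1) * t)) (at x)"
      using wp by (auto intro!: derivative_eq_intros)
    moreover have "C * (sqrt t ^ (m - 2) * t ^ n) * ((p - real n) * (2 + (x - 1) * t) powr (p - real n - 1) * t) = ?fx x t"
      by (simp add: algebra_simps)
    ultimately show "((\<lambda>\<sigma>. ?f \<sigma> t) has_field_derivative ?fx x t) (at x within ?U)"
      by (metis has_field_derivative_at_within)
  next
    fix x assume x: "x \<in> ?U"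
    have wp: "\<forall>t\<in>{0..1}. 2 + (x - 1) * t \<noteq> 0" using w_pos x by force
    have "continuous_on {0..1} (?f x)"
      using wp by (auto intro!: continuous_intros)
    then show "?f x integrable_on cbox 0 1" by (simp add: integrable_continuous_interval)
  next
    show "continuous_on (?U \<times> cbox 0 1) (\<lambda>(x, t). ?fx x t)"
      using w_pos by (auto intro!: continuous_intros simp: split_beta) (metis order_less_irrefl)
  qed (use assms in auto)
  then show ?thesis
    by (simp add: Kint_def[abs_def] p_def at_within_open[of _ ?U] assms)
qed

lemma smooth1_Kint: "smooth1 {-1<..} (Kint m C n)"
proof -
  have "dclosed {-1<..} {Kint m C n | C n. True}"
    unfolding dclosed_def using Kint_deriv by fastforce
  then show ?thesis by (rule smooth1I) blast
qed

definition Kf :: "nat \<Rightarrow> real \<Rightarrow> real" where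
  "Kf m = Kint m 1 0"

definition zf :: "nat \<Rightarrow> real \<Rightarrow> real" where
  "zf m \<sigma> = Kf m \<sigma> * (\<sigma> + 1) powr (- (real m / 2))"

lemma smooth1_zf: "smooth1 {0<..} (zf m)"
proof -
  have "smooth1 {0<..} (Kf m)" unfolding Kf_def by (rule smooth1_mono[OF smooth1_Kint]) auto
  moreover have "smooth1 {0<..} (\<lambda>\<sigma>::real. (\<sigma> + 1) powr (- (real m / 2)))"
    by (rule smooth1_compose[OF smooth1_powr smooth1_add[OF smooth1_id smooth1_const]]) auto
  ultimately show ?thesis unfolding zf_def[abs_def] by (rule smooth1_mult)
qed

lemma sqrt_pow_powr:
  fixes w :: real assumes "w > 0"
  shows "sqrt w ^ k = w powr (real k / 2)"
proof -
  have "sqrt w ^ k = (w powr (1/2)) ^ k" using assms by (simp add: powr_half_sqrt)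
  also have "\<dots> = w powr (real k * (1/2))" using assms by (simp add: powr_power)
  finally show ?thesis by simp
qed

definition Ef :: "nat \<Rightarrow> real \<Rightarrow> real" where
  "Ef m \<sigma> = sqrt (\<sigma>\<^sup>2 - 1) ^ (m - 2)"

lemma continuous_Ef: "continuous_on S (Ef m)"
  unfolding Ef_def[abs_def] by (intro continuous_intros)

lemma Ef_subst:
  assumes m: "m \<ge> 2" and \<rho>: "\<rho> > 1" and \<tau>: "0 \<le> \<tau>" "\<tau> \<le> 1"
  shows "Ef m ((\<rho> - 1) * \<tau> + 1) = sqrt (\<rho> - 1) ^ (m - 2) *
     (1 * (sqrt \<tau> ^ (m - 2) * \<tau> ^ 0) * (2 + (\<rho> - 1) * \<tau>) powr ((real m - 2) / 2 - real 0))"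
proof -
  have wp: "2 + (\<rho> - 1) * \<tau> > 0" using w_pos[of \<rho> \<tau>] \<rho> \<tau> by simp
  have "((\<rho> - 1) * \<tau> + 1)\<^sup>2 - 1 = (\<rho> - 1) * \<tau> * (2 + (\<rho> - 1) * \<tau>)"
    by (simp add: algebra_simps power2_eq_square)
  then have "Ef m ((\<rho> - 1) * \<tau> + 1) = sqrt (\<rho> - 1) ^ (m - 2) * sqrt \<tau> ^ (m - 2) * sqrt (2 + (\<rho> - 1) * \<tau>) ^ (m - 2)"
    by (simp add: Ef_def real_sqrt_mult power_mult_distrib)
  also have "sqrt (2 + (\<rho> - 1) * \<tau>) ^ (m - 2) = (2 + (\<rho> - 1) * \<tau>) powr ((real m - 2) / 2)"
    using sqrt_pow_powr[OF wp, of "m - 2"] m by (simp add: of_nat_diff)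
  finally show ?thesis by simp
qed

lemma integral_Ef_K:
  assumes m: "m \<ge> 2" and \<rho>: "\<rho> > 1"
  shows "integral {1..\<rho>} (Ef m) = sqrt (\<rho> - 1) ^ m * Kf m \<rho>"
proof -
  define I where "I = integral {1..\<rho>} (Ef m)"
  have "(Ef m has_integral I) (cbox 1 \<rho>)"
    unfolding I_def cbox_interval by (rule integrable_integral, rule integrable_continuous_interval, rule continuous_Ef)
  from has_integral_affinity[OF this, of "\<rho> - 1" 1]
  have "((\<lambda>x. Ef m ((\<rho> - 1) * x + 1)) has_integral (1 / (\<rho> - 1)) * I)
      ((\<lambda>x. (1 / (\<rho> - 1)) * x + - (1 / (\<rho> - 1))) ` {1..\<rho>})"
    using \<rho> by (simp add: cbox_interval)
  moreover have "(\<lambda>x. (1 / (\<rho> - 1)) * x + - (1 / (\<rho> - 1))) ` {1..\<rho>} = {0..1}"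
  proof -
    have "(\<lambda>x. (1 / (\<rho> - 1)) * x + - (1 / (\<rho> - 1))) ` {1..\<rho>} =
        {(1 / (\<rho> - 1)) * 1 + - (1 / (\<rho> - 1)) .. (1 / (\<rho> - 1)) * \<rho> + - (1 / (\<rho> - 1))}"
      by (subst image_affinity_atLeastAtMost) (use \<rho> in auto)
    also have "(1 / (\<rho> - 1)) * \<rho> + - (1 / (\<rho> - 1)) = 1"
    proof -
      have ne: "\<rho> - 1 \<noteq> 0" using \<rho> by simp
      have "(\<rho> - 1) * (\<rho> - 1) > 0" using \<rho> by simp
      then have sq: "1 + \<rho> * \<rho> \<noteq> \<rho> * 2" by (auto simp: algebra_simps)
      show ?thesis using ne sq by (simp add: field_simps)
    qed
    also have "(1 / (\<rho> - 1)) * 1 + - (1 / (\<rho> - 1)) = 0" by simp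
    finally show ?thesis .
  qed
  ultimately have h1: "((\<lambda>x. Ef m ((\<rho> - 1) * x + 1)) has_integral (1 / (\<rho> - 1)) * I) {0..1}" by simp
  have "((\<lambda>\<tau>. 1 * (sqrt \<tau> ^ (m - 2) * \<tau> ^ 0) * (2 + (\<rho> - 1) * \<tau>) powr ((real m - 2) / 2 - real 0)) has_integral Kf m \<rho>) {0..1}"
  proof -
    have "continuous_on {0..1} (\<lambda>\<tau>. 1 * (sqrt \<tau> ^ (m - 2) * \<tau> ^ 0) * (2 + (\<rho> - 1) * \<tau>) powr ((real m - 2) / 2 - real 0))"
      using w_pos[of \<rho>] \<rho> by (auto intro!: continuous_intros) (metis order_less_irrefl)
    then show ?thesis unfolding Kf_def Kint_def
      by (intro integrable_integral integrable_continuous_interval)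
  qed
  then have "((\<lambda>x. Ef m ((\<rho> - 1) * x + 1)) has_integral sqrt (\<rho> - 1) ^ (m - 2) * Kf m \<rho>) {0..1}"
    by (rule has_integral_eq[rotated, OF has_integral_mult_right]) (simp add: Ef_subst[OF m \<rho>])
  with h1 have "(1 / (\<rho> - 1)) * I = sqrt (\<rho> - 1) ^ (m - 2) * Kf m \<rho>"
    using has_integral_unique by blast
  then have "I = (\<rho> - 1) * sqrt (\<rho> - 1) ^ (m - 2) * Kf m \<rho>"
    using \<rho> by (simp add: field_simps)
  also have "(\<rho> - 1) * sqrt (\<rho> - 1) ^ (m - 2) = sqrt (\<rho> - 1) ^ m"
  proof -
    have "sqrt (\<rho> - 1) ^ m = sqrt (\<rho> - 1) ^ 2 * sqrt (\<rho> - 1) ^ (m - 2)"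
      using m by (metis le_add_diff_inverse power_add)
    moreover have "sqrt (\<rho> - 1) ^ 2 = \<rho> - 1" using \<rho> by simp
    ultimately show ?thesis by simp
  qed
  finally show ?thesis unfolding I_def .
qed

lemma indef_integral_deriv:
  fixes g :: "real \<Rightarrow> real"
  assumes "continuous_on UNIV g" "a < y"
  shows "((\<lambda>x. integral {a..x} g) has_real_derivative g y) (at y)"
proof -
  have c: "continuous_on {a..y+1} g" using assms(1) by (rule continuous_on_subset) simp
  have y: "y \<in> {a..y+1}" using assms(2) by simp
  have "((\<lambda>x. integral {a..x} g) has_real_derivative g y) (at y within {a..y+1})"
    by (rule integral_has_real_derivative[OF c y])
  moreover have "y \<in> interior {a..y+1}" using assms(2) by simp
  ultimately show ?thesis using at_within_interior by metis
qed

definition I0 :: "nat \<Rightarrow> real \<Rightarrow> real" where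
  "I0 m y = integral {0..y} (Ef m)"

lemma I0_deriv: "y > 0 \<Longrightarrow> (I0 m has_real_derivative Ef m y) (at y)"
  unfolding I0_def[abs_def] by (rule indef_integral_deriv[OF continuous_Ef])

lemma Ef_cosh:
  assumes m: "m \<ge> 2" and t: "t \<ge> 0"
  shows "Ef m (cosh t) * sinh t = sinh t ^ (m - 1)"
proof -
  have "(cosh t)\<^sup>2 - 1 = (sinh t)\<^sup>2" by (rule sinh_square_eq[symmetric])
  then have "sqrt ((cosh t)\<^sup>2 - 1) = sinh t" using t by simp
  then have "Ef m (cosh t) * sinh t = sinh t ^ (m - 2) * sinh t" by (simp add: Ef_def)
  also have "\<dots> = sinh t ^ (m - 1)"
  proof -
    have "m - 1 = Suc (m - 2)" using m by simp
    then show ?thesis by (simp add: power_Suc2)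
  qed
  finally show ?thesis .
qed

lemma I0_cosh_deriv: "((\<lambda>t. I0 m (cosh t)) has_real_derivative Ef m (cosh t) * sinh t) (at t)"
proof -
  have dc: "((\<lambda>t. cosh t) has_real_derivative sinh t * 1) (at t)"
    by (rule has_field_derivative_cosh[OF DERIV_ident])
  show ?thesis using DERIV_chain2[OF I0_deriv[of "cosh t" m] dc] by (simp add: cosh_real_pos)
qed

definition Bint :: "nat \<Rightarrow> real \<Rightarrow> real" where
  "Bint m s = integral {0..s} (\<lambda>t. sinh t ^ (m - 1))"

lemma Bint_I0:
  assumes m: "m \<ge> 2" and s: "s \<ge> 0"
  shows "Bint m s = I0 m (cosh s) - I0 m 1"
proof -
  have "((\<lambda>t. sinh t ^ (m - 1)) has_integral (I0 m (cosh s) - I0 m (cosh 0))) {0..s}"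
  proof (rule fundamental_theorem_of_calculus[OF s])
    fix x assume x: "x \<in> {0..s}"
    have "((\<lambda>t. I0 m (cosh t)) has_real_derivative sinh x ^ (m - 1)) (at x)"
      using I0_cosh_deriv[of m x] Ef_cosh[OF m, of x] x by simp
    then show "((\<lambda>t. I0 m (cosh t)) has_vector_derivative sinh x ^ (m - 1)) (at x within {0..s})"
      by (simp add: has_real_derivative_iff_has_vector_derivative[symmetric] has_field_derivative_at_within)
  qed
  then show ?thesis unfolding Bint_def by (simp add: integral_unique)
qed

lemma integral_1_I0:
  assumes "\<rho> \<ge> 1"
  shows "integral {1..\<rho>} (Ef m) = I0 m \<rho> - I0 m 1"
proof -
  have "integral {0..1} (Ef m) + integral {1..\<rho>} (Ef m) = integral {0..\<rho>} (Ef m)"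
    by (rule Henstock_Kurzweil_Integration.integral_combine) (use assms in \<open>auto intro: integrable_continuous_interval continuous_Ef\<close>)
  then show ?thesis unfolding I0_def by simp
qed

lemma Bint_eq:
  assumes m: "m \<ge> 2" and s: "s \<ge> 0"
  shows "Bint m s = sinh s ^ m * zf m (cosh s)"
proof (cases "s = 0")
  case True then show ?thesis using m by (simp add: Bint_def)
next
  case False
  then have s0: "s > 0" using s by simp
  have c1: "cosh s > 1" using cosh_real_strict_mono[of 0 s] s0 by simp
  have "Bint m s = sqrt (cosh s - 1) ^ m * Kf m (cosh s)"
    using Bint_I0[OF m s] integral_1_I0[of "cosh s" m] integral_Ef_K[OF m c1] c1 by simp
  also have "sqrt (cosh s - 1) = sinh s / sqrt (cosh s + 1)"
  proof -
    have "sinh s = sqrt (sinh s ^ 2)" using s by simp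
    also have "sinh s ^ 2 = (cosh s - 1) * (cosh s + 1)"
      unfolding sinh_square_eq by (simp add: algebra_simps power2_eq_square)
    finally have "sinh s = sqrt (cosh s - 1) * sqrt (cosh s + 1)" by (simp add: real_sqrt_mult)
    moreover have "sqrt (cosh s + 1) > 0" by (simp add: add_pos_pos)
    ultimately show ?thesis by (simp add: field_simps)
  qed
  also have "(sinh s / sqrt (cosh s + 1)) ^ m * Kf m (cosh s) = sinh s ^ m * (Kf m (cosh s) / sqrt (cosh s + 1) ^ m)"
    by (simp add: power_divide)
  also have "sqrt (cosh s + 1) ^ m = (cosh s + 1) powr (real m / 2)"
    by (rule sqrt_pow_powr) (simp add: add_pos_pos)
  also have "Kf m (cosh s) / (cosh s + 1) powr (real m / 2) = zf m (cosh s)"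
    unfolding zf_def by (simp add: powr_minus_divide)
  finally show ?thesis .
qed


lemma Bint_ineq:
  assumes m: "m \<ge> 2" and s: "s > 0"
  shows "real (m - 1) * Bint m s < sinh s ^ (m - 1)"
proof -
  define D where "D t = sinh t ^ (m - 1) - real (m - 1) * (I0 m (cosh t) - I0 m 1)" for t
  define D' where "D' t = real (m - 1) * sinh t ^ (m - 2) * cosh t - real (m - 1) * (Ef m (cosh t) * sinh t)" for t
  have m1: "m - 1 = Suc (m - 2)" using m by simp
  have dD: "(D has_real_derivative D' t) (at t)" for t
  proof -
    have d1: "((\<lambda>t. sinh t ^ (m - 1)) has_real_derivative real (m - 1) * sinh t ^ (m - 2) * cosh t) (at t)"
    proof -
      have ds: "((\<lambda>t. sinh t) has_real_derivative cosh t * 1) (at t)"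
        by (rule has_field_derivative_sinh[OF DERIV_ident])
      have e: "m - 1 - Suc 0 = m - 2" by simp
      show ?thesis using DERIV_chain2[OF DERIV_pow ds, of "m - 1"] m by (simp only: e mult.assoc mult_1_right)
    qed
    have d2: "((\<lambda>t. real (m - 1) * (I0 m (cosh t) - I0 m 1)) has_real_derivative real (m - 1) * (Ef m (cosh t) * sinh t - 0)) (at t)"
      by (intro DERIV_cmult DERIV_diff I0_cosh_deriv DERIV_const)
    show ?thesis unfolding D_def[abs_def] D'_def using DERIV_diff[OF d1 d2] by simp
  qed
  obtain \<xi> where \<xi>: "0 < \<xi>" "\<xi> < s" "D s - D 0 = (s - 0) * D' \<xi>"
    using MVT2[OF s, of D D'] dD by blast
  have "D 0 = 0" unfolding D_def using m1 by simp
  have "D' \<xi> = real (m - 1) * sinh \<xi> ^ (m - 2) * (cosh \<xi> - sinh \<xi>)"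
  proof -
    have "Ef m (cosh \<xi>) * sinh \<xi> = sinh \<xi> ^ (m - 1)"
      using Ef_cosh[OF m, of \<xi>] \<xi>(1) by simp
    also have "sinh \<xi> ^ (m - 1) = sinh \<xi> ^ (m - 2) * sinh \<xi>"
      unfolding m1 by (rule power_Suc2)
    finally have E: "Ef m (cosh \<xi>) * sinh \<xi> = sinh \<xi> ^ (m - 2) * sinh \<xi>" .
    show ?thesis unfolding D'_def E by (simp add: algebra_simps)
  qed
  moreover have "real (m - 1) * sinh \<xi> ^ (m - 2) * (cosh \<xi> - sinh \<xi>) > 0"
    using m \<xi>(1) sinh_less_cosh_real[of \<xi>] by (intro mult_pos_pos) auto
  ultimately have "D' \<xi> > 0" using m by (simp add: of_nat_diff)
  moreover have "D s = s * D' \<xi>" using \<xi> \<open>D 0 = 0\<close> by simp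
  ultimately have "D s > 0" using s by simp
  then show ?thesis unfolding D_def using Bint_I0[OF m, of s] s by simp
qed

lemma Bint_nonneg: "s \<ge> 0 \<Longrightarrow> Bint m s \<ge> 0"
  unfolding Bint_def by (rule integral_nonneg) (auto intro!: integrable_continuous_interval continuous_intros)

definition Qf :: "nat \<Rightarrow> real \<Rightarrow> real \<Rightarrow> real" where
  "Qf m c \<sigma> = 1 - c\<^sup>2 * (\<sigma>\<^sup>2 - 1) * (zf m \<sigma>)\<^sup>2"

lemma Qf_pos:
  assumes m: "m \<ge> 2" and c: "1 - real m \<le> c" "c \<le> real m - 1" and \<sigma>: "\<sigma> > 0"
  shows "Qf m c \<sigma> > 0"
proof (cases "\<sigma> \<le> 1")
  case True
  then have "\<sigma>\<^sup>2 - 1 \<le> 0" using \<sigma> by (simp add: power_le_one)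
  then have "c\<^sup>2 * (\<sigma>\<^sup>2 - 1) * (zf m \<sigma>)\<^sup>2 \<le> 0"
    by (simp add: mult_nonneg_nonpos mult_nonpos_nonneg)
  then show ?thesis unfolding Qf_def by simp
next
  case False
  define s where "s = arcosh \<sigma>"
  have s: "s > 0" "cosh s = \<sigma>" using False by (auto simp: s_def)
  define y where "y = sinh s * zf m (cosh s)"
  have sh: "sinh s > 0" using s by simp
  have B: "Bint m s = sinh s ^ (m - 1) * y"
  proof -
    have "sinh s ^ m = sinh s ^ (m - 1) * sinh s" using m
      by (metis One_nat_def Suc_le_lessD less_le_trans numeral_2_eq_2 power_minus_mult zero_less_Suc)
    then show ?thesis using Bint_eq[OF m, of s] s by (simp add: y_def)
  qed
  have "y = Bint m s / sinh s ^ (m - 1)" using B sh by simp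
  then have y0: "y \<ge> 0" using Bint_nonneg[of s m] sh s by simp
  have "real (m - 1) * (sinh s ^ (m - 1) * y) < sinh s ^ (m - 1) * 1"
    using Bint_ineq[OF m s(1)] B by simp
  then have y1: "real (m - 1) * y < 1" using sh
    by (metis (no_types, lifting) mult.left_commute mult_less_cancel_left_pos zero_less_power)
  have "\<bar>c\<bar> \<le> real (m - 1)" using c m by (simp add: of_nat_diff)
  then have "\<bar>c\<bar> * y < 1" using y0 y1
    by (meson le_less_trans mult_right_mono)
  then have "(\<bar>c\<bar> * y)\<^sup>2 < 1" using y0 by (simp add: abs_square_less_1)
  moreover have "c\<^sup>2 * (\<sigma>\<^sup>2 - 1) * (zf m \<sigma>)\<^sup>2 = (\<bar>c\<bar> * y)\<^sup>2"
    using s by (simp add: y_def power_mult_distrib sinh_square_eq)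
  ultimately show ?thesis unfolding Qf_def by simp
qed

definition Phi :: "nat \<Rightarrow> real \<Rightarrow> real \<Rightarrow> real" where
  "Phi m c \<sigma> = c * zf m \<sigma> * Qf m c \<sigma> powr (- 1 / 2)"

definition Ff :: "nat \<Rightarrow> real \<Rightarrow> real \<Rightarrow> real" where
  "Ff m c \<sigma> = integral {1/2..\<sigma>} (Phi m c)"

definition Gf :: "nat \<Rightarrow> real \<Rightarrow> real \<Rightarrow> real" where
  "Gf m c u = Ff m c ((1 + u) / (1 - u))"

locale crange =
  fixes m :: nat and c :: real
  assumes m: "m \<ge> 2" and c1: "1 - real m \<le> c" and c2: "c \<le> real m - 1"
begin

lemma Qpos: "\<sigma> > 0 \<Longrightarrow> Qf m c \<sigma> > 0"
  using Qf_pos[OF m c1 c2] .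

lemma smooth_Qf: "smooth1 {0<..} (Qf m c)"
proof -
  have "smooth1 {0<..} (\<lambda>\<sigma>. 1 + (- c\<^sup>2) * ((\<sigma> * \<sigma> + (- 1)) * (zf m \<sigma> * zf m \<sigma>)))"
    by (intro smooth1_add smooth1_mult smooth1_const smooth1_id smooth1_zf)
  then show ?thesis
    by (rule smooth1_cong) (auto simp: Qf_def power2_eq_square)
qed

lemma smooth_Phi: "smooth1 {0<..} (Phi m c)"
proof -
  have "smooth1 {0<..} (\<lambda>\<sigma>. c * zf m \<sigma> * (\<lambda>q. q powr (- 1 / 2)) (Qf m c \<sigma>))"
    by (intro smooth1_mult smooth1_const smooth1_zf smooth1_compose[OF smooth1_powr smooth_Qf])
       (simp add: Qpos)
  then show ?thesis by (simp add: Phi_def[abs_def])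
qed

lemma cont_Phi: "continuous_on {0<..} (Phi m c)"
proof -
  obtain h' where "\<forall>x\<in>{0<..}. (Phi m c has_real_derivative h' x) (at x)"
    using smooth1_D[OF smooth_Phi] by blast
  then show ?thesis by (meson DERIV_isCont continuous_at_imp_continuous_on)
qed

lemma Ff_deriv:
  assumes "\<sigma> > 1/2"
  shows "(Ff m c has_real_derivative Phi m c \<sigma>) (at \<sigma>)"
proof -
  have cc: "continuous_on {1/2..\<sigma>+1} (Phi m c)"
    by (rule continuous_on_subset[OF cont_Phi]) auto
  have y: "\<sigma> \<in> {1/2..\<sigma>+1}" using assms by simp
  have "(Ff m c has_real_derivative Phi m c \<sigma>) (at \<sigma> within {1/2..\<sigma>+1})"
    unfolding Ff_def[abs_def] by (rule integral_has_real_derivative[OF cc y])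
  moreover have "\<sigma> \<in> interior {1/2..\<sigma>+1}" using assms by simp
  ultimately show ?thesis using at_within_interior by metis
qed

lemma smooth_Ff: "smooth1 {1/2<..} (Ff m c)"
proof -
  have "dclosed {1/2<..} ({h. smooth1 {1/2<..} h} \<union> {Ff m c})"
    unfolding dclosed_def
  proof (intro ballI)
    fix g assume g: "g \<in> {h. smooth1 {1/2<..} h} \<union> {Ff m c}"
    show "\<exists>h'\<in>{h. smooth1 {1/2<..} h} \<union> {Ff m c}. \<forall>x\<in>{1/2<..}. (g has_real_derivative h' x) (at x)"
    proof (cases "g = Ff m c")
      case True
      have "smooth1 {1/2<..} (Phi m c)" by (rule smooth1_mono[OF smooth_Phi]) auto
      then show ?thesis using True Ff_deriv by (intro bexI[of _ "Phi m c"]) auto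
    next
      case False
      then have "smooth1 {1/2<..} g" using g by auto
      then obtain h' where "smooth1 {1/2<..} h'" "\<forall>x\<in>{1/2<..}. (g has_real_derivative h' x) (at x)"
        using smooth1_D by blast
      then show ?thesis by blast
    qed
  qed
  then show ?thesis by (rule smooth1I) simp
qed

lemma rho_gt: "u \<in> {-1/3<..<1} \<Longrightarrow> (1 + u) / (1 - u) > (1/2::real)"
  by (auto simp: field_simps)

lemma smooth_Gf: "smooth1 {-1/3<..<1} (Gf m c)"
proof -
  have r: "smooth1 {-1/3<..<1} (\<lambda>u::real. (1 + u) * (\<lambda>q. q powr (-1)) (1 + (-1) * u))"
    by (intro smooth1_mult smooth1_add smooth1_const smooth1_id smooth1_compose[OF smooth1_powr]) auto
  have r': "smooth1 {-1/3<..<1} (\<lambda>u::real. (1 + u) / (1 - u))"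
    by (rule smooth1_cong[OF r]) (auto simp: powr_minus_divide)
  show ?thesis unfolding Gf_def[abs_def]
    by (rule smooth1_compose[OF smooth_Ff r']) (use rho_gt in auto)
qed

lemma A_fun_eq:
  assumes s: "s \<ge> 0"
  shows "A_fun m c s = c * sinh s * zf m (cosh s)"
proof (cases "s = 0")
  case True then show ?thesis using m by (simp add: A_fun_def)
next
  case False
  then have sh: "sinh s > 0" using s by simp
  have "A_fun m c s = c / sinh s ^ (m - 1) * (sinh s ^ m * zf m (cosh s))"
    using Bint_eq[OF m s] by (simp add: A_fun_def Bint_def)
  also have "sinh s ^ m = sinh s ^ (m - 1) * sinh s" using m
    by (metis One_nat_def Suc_le_lessD less_le_trans numeral_2_eq_2 power_minus_mult zero_less_Suc)
  finally show ?thesis using sh by (simp add: field_simps)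
qed

lemma integrand_eq:
  assumes s: "s \<ge> 0"
  shows "A_fun m c s / sqrt (1 - (A_fun m c s)\<^sup>2) = Phi m c (cosh s) * sinh s"
proof -
  have "1 - (A_fun m c s)\<^sup>2 = Qf m c (cosh s)"
    using A_fun_eq[OF s] by (simp add: Qf_def power_mult_distrib sinh_square_eq)
  moreover have q: "Qf m c (cosh s) > 0" using Qpos by simp
  moreover have "Qf m c (cosh s) powr (- 1 / 2) = 1 / sqrt (Qf m c (cosh s))"
    using q by (simp add: powr_minus_divide powr_half_sqrt[symmetric])
  ultimately show ?thesis using A_fun_eq[OF s] by (simp add: Phi_def)
qed

lemma hyp_r_nonneg:
  fixes x :: "real^'n"
  assumes "norm x < 1" shows "hyp_r x \<ge> 0"
  using assms unfolding hyp_r_def by (simp add: field_simps)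

lemma cosh_hyp_r:
  fixes x :: "real^'n"
  assumes "norm x < 1" shows "cosh (hyp_r x) = (1 + (norm x)\<^sup>2) / (1 - (norm x)\<^sup>2)"
proof -
  have "0 < 1 + norm x" by (metis add_pos_nonneg norm_ge_zero zero_less_one)
  then have p: "(1 + norm x) / (1 - norm x) > 0" using assms by simp
  have "cosh (hyp_r x) = ((1 + norm x) / (1 - norm x) + (1 - norm x) / (1 + norm x)) / 2"
    unfolding hyp_r_def using cosh_ln_real[OF p] by (simp add: inverse_eq_divide)
  also have "\<dots> = (1 + (norm x)\<^sup>2) / (1 - (norm x)\<^sup>2)"
  proof -
    define n where "n = norm x"
    have a: "1 - n > 0" "1 + n > 0" using assms \<open>0 < 1 + norm x\<close> by (auto simp: n_def)
    have e: "1 - n\<^sup>2 = (1 - n) * (1 + n)" by (simp add: power2_eq_square algebra_simps)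
    have s1: "(1 + n) / (1 - n) + (1 - n) / (1 + n) = ((1 + n) * (1 + n) + (1 - n) * (1 - n)) / ((1 - n) * (1 + n))"
      using a by (simp add: add_frac_eq)
    have s2: "(1 + n) * (1 + n) + (1 - n) * (1 - n) = 2 * (1 + n\<^sup>2)" by (simp add: algebra_simps power2_eq_square)
    have "((1 + n) / (1 - n) + (1 - n) / (1 + n)) / 2 = (1 + n\<^sup>2) / (1 - n\<^sup>2)"
    proof -
      have p: "(1 - n) * (1 + n) > 0" using a by simp
      then have nz: "1 - n * n \<noteq> 0" "2 - n * (n * 2) \<noteq> 0" "1 - n\<^sup>2 \<noteq> 0"
        by (auto simp: algebra_simps power2_eq_square)
      show ?thesis unfolding s1 s2 e using a nz by (simp add: field_simps)
    qed
    then show ?thesis by (simp only: n_def)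
  qed
  finally show ?thesis .
qed

lemma f_fun_eq:
  fixes x :: "real^'n"
  assumes x: "norm x < 1"
  shows "f_fun m c x = Gf m c ((norm x)\<^sup>2) - Ff m c 1"
proof -
  define r where "r = hyp_r x"
  have r0: "r \<ge> 0" using hyp_r_nonneg[OF x] by (simp add: r_def)
  have "((\<lambda>t. Phi m c (cosh t) * sinh t) has_integral (Ff m c (cosh r) - Ff m c (cosh 0))) {0..r}"
  proof (rule fundamental_theorem_of_calculus[OF r0])
    fix t assume t: "t \<in> {0..r}"
    have "cosh t > 1/2" using cosh_real_ge_1[of t] by simp
    have dc: "((\<lambda>t. cosh t) has_real_derivative sinh t * 1) (at t)"
      by (rule has_field_derivative_cosh[OF DERIV_ident])
    have "((\<lambda>t. Ff m c (cosh t)) has_real_derivative Phi m c (cosh t) * sinh t) (at t)"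
      using DERIV_chain2[OF Ff_deriv[OF \<open>cosh t > 1/2\<close>] dc] by simp
    then show "((\<lambda>t. Ff m c (cosh t)) has_vector_derivative Phi m c (cosh t) * sinh t) (at t within {0..r})"
      by (simp add: has_real_derivative_iff_has_vector_derivative[symmetric] has_field_derivative_at_within)
  qed
  then have hi: "((\<lambda>t. Phi m c (cosh t) * sinh t) has_integral (Ff m c (cosh r) - Ff m c 1)) {0..r}"
    by simp
  have "((\<lambda>s. A_fun m c s / sqrt (1 - (A_fun m c s)\<^sup>2)) has_integral (Ff m c (cosh r) - Ff m c 1)) {0..r}"
    by (rule has_integral_eq[OF _ hi]) (simp add: integrand_eq)
  then have "f_fun m c x = Ff m c (cosh r) - Ff m c 1"
    unfolding f_fun_def r_def by (simp add: integral_unique)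
  then show ?thesis using cosh_hyp_r[OF x] by (simp add: r_def Gf_def)
qed

end


definition zd :: "nat \<Rightarrow> real \<Rightarrow> real" where
  "zd m \<sigma> = deriv (zf m) \<sigma>"

lemma zf_deriv_ex: "\<exists>h'. smooth1 {0<..} h' \<and> (\<forall>x\<in>{0<..}. (zf m has_real_derivative h' x) (at x))"
  using smooth1_D[OF smooth1_zf] by blast

lemma zf_deriv: "\<sigma> > 0 \<Longrightarrow> (zf m has_real_derivative zd m \<sigma>) (at \<sigma>)"
  using zf_deriv_ex[of m] unfolding zd_def by (metis DERIV_imp_deriv greaterThan_iff)

lemma zd_cont: "continuous_on {0<..} (zd m)"
proof -
  obtain h' where h': "smooth1 {0<..} h'" "\<forall>x\<in>{0<..}. (zf m has_real_derivative h' x) (at x)"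
    using zf_deriv_ex by blast
  have "\<forall>x\<in>{0<..}. zd m x = h' x" using h'(2) unfolding zd_def by (metis DERIV_imp_deriv)
  then show ?thesis using smooth1_continuous_on[OF h'(1)] continuous_on_cong by (metis (no_types, lifting))
qed

lemma zf_cont: "continuous_on {0<..} (zf m)"
  using zf_deriv by (meson DERIV_isCont continuous_at_imp_continuous_on greaterThan_iff)

context crange begin

lemma ode_gt1:
  assumes \<sigma>: "\<sigma> > 1"
  shows "real m * \<sigma> * zf m \<sigma> + (\<sigma>\<^sup>2 - 1) * zd m \<sigma> = 1"
proof -
  define R where "R y = (y\<^sup>2 - 1) powr (real m / 2) * zf m y" for y
  define L where "L y = I0 m y - I0 m 1" for y
  have LR: "L y = R y" if y: "y > 1" for y
  proof -
    have y1: "y - 1 > 0" "y + 1 > 0" using y by auto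
    have "L y = sqrt (y - 1) ^ m * Kf m y"
      using integral_1_I0[of y m] integral_Ef_K[OF m y] y by (simp add: L_def)
    also have "sqrt (y - 1) ^ m = (y - 1) powr (real m / 2)" by (rule sqrt_pow_powr[OF y1(1)])
    also have "(y - 1) powr (real m / 2) * Kf m y = R y"
    proof -
      have "(y\<^sup>2 - 1) powr (real m / 2) = (y - 1) powr (real m / 2) * (y + 1) powr (real m / 2)"
        using y1 by (simp add: powr_mult[symmetric] power2_eq_square algebra_simps)
      moreover have "(y + 1) powr (real m / 2) * (y + 1) powr (- (real m / 2)) = 1"
        using y1 by (simp add: powr_add[symmetric])
      ultimately show ?thesis unfolding R_def zf_def by (simp add: algebra_simps)
    qed
    finally show ?thesis .
  qed
  have s0: "\<sigma>\<^sup>2 - 1 > 0" using \<sigma> by (simp add: power_less_one_iff)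
  have dL: "(L has_real_derivative Ef m \<sigma>) (at \<sigma>)"
    unfolding L_def[abs_def] using I0_deriv[of \<sigma> m] \<sigma> by (auto intro!: derivative_eq_intros)
  have dR: "(R has_real_derivative
      (real m / 2) * (\<sigma>\<^sup>2 - 1) powr (real m / 2 - 1) * (2 * \<sigma>) * zf m \<sigma> + (\<sigma>\<^sup>2 - 1) powr (real m / 2) * zd m \<sigma>) (at \<sigma>)"
    unfolding R_def[abs_def] using s0 \<sigma>
    by (auto intro!: derivative_eq_intros zf_deriv simp: power2_eq_square algebra_simps)
  have ev: "\<forall>\<^sub>F y in nhds \<sigma>. L y = R y"
    using eventually_nhds_in_open[of "{1<..}" \<sigma>] \<sigma> LR by (auto elim!: eventually_mono)
  have dR': "(R has_real_derivative Ef m \<sigma>) (at \<sigma>)"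
    using dL DERIV_cong_ev[OF refl ev refl] by simp
  define P where "P = (\<sigma>\<^sup>2 - 1) powr (real m / 2 - 1)"
  have P0: "P > 0" using s0 by (simp add: P_def)
  have EP: "Ef m \<sigma> = P"
  proof -
    have "Ef m \<sigma> = (\<sigma>\<^sup>2 - 1) powr (real (m - 2) / 2)" unfolding Ef_def by (rule sqrt_pow_powr[OF s0])
    then show ?thesis using m by (simp add: P_def of_nat_diff diff_divide_distrib)
  qed
  have PP: "(\<sigma>\<^sup>2 - 1) powr (real m / 2) = P * (\<sigma>\<^sup>2 - 1)"
  proof -
    have "(\<sigma>\<^sup>2 - 1) powr (real m / 2) = (\<sigma>\<^sup>2 - 1) powr ((real m / 2 - 1) + 1)" by simp
    also have "\<dots> = P * (\<sigma>\<^sup>2 - 1)" unfolding P_def powr_add using s0 by simp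
    finally show ?thesis .
  qed
  have "P = (real m / 2) * P * (2 * \<sigma>) * zf m \<sigma> + P * (\<sigma>\<^sup>2 - 1) * zd m \<sigma>"
    using DERIV_unique[OF dR dR'] EP PP by (simp add: P_def)
  then have "P * 1 = P * (real m * \<sigma> * zf m \<sigma> + (\<sigma>\<^sup>2 - 1) * zd m \<sigma>)"
    by (simp add: algebra_simps)
  then show ?thesis using P0 by simp
qed

lemma ode:
  assumes \<sigma>: "\<sigma> \<ge> 1"
  shows "real m * \<sigma> * zf m \<sigma> + (\<sigma>\<^sup>2 - 1) * zd m \<sigma> = 1"
proof (cases "\<sigma> = 1")
  case False then show ?thesis using ode_gt1 \<sigma> by simp
next
  case True
  define g where "g y = real m * y * zf m y + (y\<^sup>2 - 1) * zd m y" for y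
  have "continuous_on {0<..} g" unfolding g_def[abs_def]
    by (intro continuous_intros zf_cont zd_cont)
  then have "isCont g 1" using continuous_on_interior[of "{0<..}" g 1] by (simp add: interior_open)
  then have t1: "(g \<longlongrightarrow> g 1) (at_right 1)"
    by (simp add: isCont_def filterlim_at_split)
  have "\<forall>\<^sub>F y in at_right 1. g y = 1"
    unfolding eventually_at_right_field using ode_gt1 g_def by (auto intro!: exI[of _ 2])
  then have t2: "(g \<longlongrightarrow> 1) (at_right 1)"
    by (rule tendsto_eventually[THEN tendsto_cong[THEN iffD1, rotated]]) (auto elim: eventually_mono)
  have "g 1 = 1" using tendsto_unique[OF trivial_limit_at_right_real t1 t2] .
  then show ?thesis using True g_def by simp
qed

definition Qd :: "real \<Rightarrow> real" where
  "Qd \<sigma> = - (c\<^sup>2 * (2 * \<sigma> * (zf m \<sigma>)\<^sup>2 + (\<sigma>\<^sup>2 - 1) * (2 * zf m \<sigma> * zd m \<sigma>)))"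

definition Phi1 :: "real \<Rightarrow> real" where
  "Phi1 \<sigma> = c * zd m \<sigma> * Qf m c \<sigma> powr (- 1 / 2) + c * zf m \<sigma> * ((- 1 / 2) * Qf m c \<sigma> powr (- 1 / 2 - 1) * Qd \<sigma>)"

lemma Qf_deriv: "\<sigma> > 0 \<Longrightarrow> (Qf m c has_real_derivative Qd \<sigma>) (at \<sigma>)"
  unfolding Qf_def[abs_def] Qd_def
  by (auto intro!: derivative_eq_intros zf_deriv simp: power2_eq_square algebra_simps)

lemma Phi_deriv: "\<sigma> > 0 \<Longrightarrow> (Phi m c has_real_derivative Phi1 \<sigma>) (at \<sigma>)"
  unfolding Phi_def[abs_def] Phi1_def
  using Qpos[of \<sigma>]
  by (auto intro!: derivative_eq_intros zf_deriv Qf_deriv simp: algebra_simps)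

definition G1 :: "real \<Rightarrow> real" where
  "G1 u = Phi m c ((1 + u) / (1 - u)) * (2 / (1 - u)\<^sup>2)"

definition G2 :: "real \<Rightarrow> real" where
  "G2 u = Phi1 ((1 + u) / (1 - u)) * (2 / (1 - u)\<^sup>2) * (2 / (1 - u)\<^sup>2) + Phi m c ((1 + u) / (1 - u)) * (4 / (1 - u) ^ 3)"

lemma rho_deriv: "u < 1 \<Longrightarrow> ((\<lambda>u. (1 + u) / (1 - u)) has_real_derivative 2 / (1 - u)\<^sup>2) (at u)"
  by (auto intro!: derivative_eq_intros simp: field_simps power2_eq_square)

lemma Gf_deriv:
  assumes u: "u \<in> {-1/3<..<1}"
  shows "(Gf m c has_real_derivative G1 u) (at u)"
proof -
  have "((\<lambda>u. Ff m c ((1 + u) / (1 - u))) has_real_derivative Phi m c ((1 + u) / (1 - u)) * (2 / (1 - u)\<^sup>2)) (at u)"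
    using DERIV_chain2[OF Ff_deriv[OF rho_gt[OF u]] rho_deriv] u by simp
  then show ?thesis unfolding Gf_def[abs_def] G1_def .
qed

lemma G1_deriv:
  assumes u: "u \<in> {-1/3<..<1}"
  shows "(G1 has_real_derivative G2 u) (at u)"
proof -
  have "(1/2::real) < (1 + u) / (1 - u)" by (rule rho_gt[OF u])
  then have r: "(1 + u) / (1 - u) > 0" by linarith
  have d1: "((\<lambda>u. Phi m c ((1 + u) / (1 - u))) has_real_derivative Phi1 ((1 + u) / (1 - u)) * (2 / (1 - u)\<^sup>2)) (at u)"
    using DERIV_chain2[OF Phi_deriv[OF r] rho_deriv] u by simp
  have d2: "((\<lambda>u. 2 / (1 - u)\<^sup>2) has_real_derivative 4 / (1 - u) ^ 3) (at u)"
  proof -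
    have v: "1 - u \<noteq> 0" using u by simp
    have dv: "((\<lambda>v. 2 / v\<^sup>2) has_real_derivative - 4 / (1 - u) ^ 3) (at (1 - u))"
      using v by (auto intro!: derivative_eq_intros simp: divide_simps power2_eq_square power3_eq_cube)
    have "((\<lambda>u. 1 - u) has_real_derivative -1) (at u)" by (auto intro!: derivative_eq_intros)
    from DERIV_chain2[OF dv this] show ?thesis by simp
  qed
  show ?thesis unfolding G1_def[abs_def] G2_def using DERIV_mult[OF d1 d2] by (simp add: algebra_simps)
qed

end


lemma sum_option:
  fixes f :: "'a::finite option \<Rightarrow> 'b::comm_monoid_add"
  shows "(\<Sum>a\<in>UNIV. f a) = f None + (\<Sum>i\<in>UNIV. f (Some i))"
proof -
  have "(\<Sum>a\<in>UNIV. f a) = (\<Sum>a\<in>insert None (range Some). f a)" by (simp add: UNIV_option_conv[symmetric])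
  also have "\<dots> = f None + (\<Sum>a\<in>range Some. f a)" by (subst sum.insert) auto
  also have "(\<Sum>a\<in>range Some. f a) = (\<Sum>i\<in>UNIV. f (Some i))" by (subst sum.reindex) (auto simp: inj_on_def)
  finally show ?thesis .
qed

lemma matrix_inv_eq:
  fixes A B :: "real^'n^'n"
  assumes "A ** B = mat 1" "B ** A = mat 1"
  shows "matrix_inv A = B"
  unfolding matrix_inv_def
proof (rule some_equality)
  show "A ** B = mat 1 \<and> B ** A = mat 1" using assms by simp
  fix B' assume "A ** B' = mat 1 \<and> B' ** A = mat 1"
  then have "B' = B' ** (A ** B)" "B' ** A = mat 1" using assms by auto
  then show "B' = B" by (metis matrix_mul_assoc matrix_mul_lid)
qed

lemma diag_mult:
  fixes d e :: "'n::finite \<Rightarrow> real"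
  shows "(\<chi> a b. if a = b then d a else 0) ** (\<chi> a b. if a = b then e a else 0) =
         (\<chi> a b. if a = b then d a * e a else (0::real))"
proof -
  have "(\<Sum>k\<in>UNIV. (if a = k then d a else 0) * (if k = b then e k else 0)) = (if a = b then d a * e a else 0)" for a b
  proof -
    have "(\<Sum>k\<in>UNIV. (if a = k then d a else 0) * (if k = b then e k else 0)) =
        (\<Sum>k\<in>UNIV. if k = a then (if a = b then d a * e a else 0) else 0)"
      by (rule sum.cong) auto
    then show ?thesis by simp
  qed
  then show ?thesis unfolding matrix_matrix_mult_def by (simp add: vec_eq_iff)
qed

lemma matrix_inv_diag:
  fixes d :: "'n::finite \<Rightarrow> real"
  assumes "\<And>a. d a \<noteq> 0"
  shows "matrix_inv (\<chi> a b. if a = b then d a else 0) = (\<chi> a b. if a = b then 1 / d a else 0)"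
  by (rule matrix_inv_eq) (simp_all add: diag_mult assms mat_def vec_eq_iff)

lemma rank1_mult:
  fixes v :: "'n::finite \<Rightarrow> real"
  shows "(\<chi> i j. a * (if i = j then 1 else 0) + b * v i * v j) ** (\<chi> i j. a' * (if i = j then 1 else 0) + b' * v i * v j) =
     (\<chi> i j. a * a' * (if i = j then 1 else 0) + (a * b' + b * a' + b * b' * (\<Sum>k\<in>UNIV. v k * v k)) * v i * v j)"
proof -
  have "(\<Sum>k\<in>UNIV. (a * (if i = k then 1 else 0) + b * v i * v k) * (a' * (if k = j then 1 else 0) + b' * v k * v j)) =
      a * a' * (if i = j then 1 else 0) + (a * b' + b * a' + b * b' * (\<Sum>k\<in>UNIV. v k * v k)) * v i * v j" for i j
  proof -
    have "(\<Sum>k\<in>UNIV. (a * (if i = k then 1 else 0) + b * v i * v k) * (a' * (if k = j then 1 else 0) + b' * v k * v j)) =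
      (\<Sum>k\<in>UNIV. (if k = i then a * a' * (if i = j then 1 else 0) else 0) + (if k = i then a * b' * v j * v k else 0)
        + (if k = j then b * a' * v i * v k else 0) + b * b' * v i * v j * (v k * v k))"
      by (rule sum.cong) (auto simp: algebra_simps)
    also have "\<dots> = a * a' * (if i = j then 1 else 0) + a * b' * v j * v i + b * a' * v i * v j + b * b' * v i * v j * (\<Sum>k\<in>UNIV. v k * v k)"
      by (simp add: sum.distrib sum_distrib_left)
    finally show ?thesis by (simp add: algebra_simps)
  qed
  then show ?thesis unfolding matrix_matrix_mult_def by (simp add: vec_eq_iff)
qed

lemma matrix_inv_rank1:
  fixes v :: "'n::finite \<Rightarrow> real"
  assumes "a * a' = 1" "a * b' + b * a' + b * b' * (\<Sum>k\<in>UNIV. v k * v k) = 0"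
  shows "matrix_inv (\<chi> i j. a * (if i = j then 1 else 0) + b * v i * v j) = (\<chi> i j. a' * (if i = j then 1 else 0) + b' * v i * v j)"
proof (rule matrix_inv_eq)
  show "(\<chi> i j. a * (if i = j then 1 else 0) + b * v i * v j) ** (\<chi> i j. a' * (if i = j then 1 else 0) + b' * v i * v j) = mat 1"
    unfolding rank1_mult assms by (simp add: mat_def)
  have e: "a' * b + b' * a + b' * b * (\<Sum>k\<in>UNIV. v k * v k) = 0" using assms(2) by (simp add: algebra_simps)
  show "(\<chi> i j. a' * (if i = j then 1 else 0) + b' * v i * v j) ** (\<chi> i j. a * (if i = j then 1 else 0) + b * v i * v j) = mat 1"
    unfolding rank1_mult e using assms(1) by (simp add: mat_def mult.commute)
qed


lemma gm_Some[simp]: "graph_map f y $ Some k = y $ k"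
  by (simp add: graph_map_def)
lemma gm_None[simp]: "graph_map f y $ None = f y"
  by (simp add: graph_map_def)
lemma base_gm[simp]: "base_pt (graph_map f x) = x"
  by (simp add: base_pt_def vec_eq_iff)

lemma base_line_Some: "base_pt (p + t *\<^sub>R axis (Some k) 1) = base_pt p + t *\<^sub>R axis k 1"
  by (simp add: base_pt_def vec_eq_iff axis_def)
lemma base_line_None: "base_pt (p + t *\<^sub>R axis None 1) = base_pt p"
  by (simp add: base_pt_def vec_eq_iff axis_def)

definition lam :: "real^('m::finite) \<Rightarrow> real" where
  "lam x = 4 / (1 - (norm x)\<^sup>2)\<^sup>2"

lemma normsq_lt1: "norm (x::real^'m) < 1 \<Longrightarrow> (norm x)\<^sup>2 < 1"
  by (simp add: abs_square_less_1)

lemma lam_pos: "norm (x::real^'m) < 1 \<Longrightarrow> lam x > 0"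
  unfolding lam_def using normsq_lt1[of x] by simp

lemma hyp_matrix: "(\<chi> a b. hyp_metric x a b) = (\<chi> a b. if a = b then lam x else 0)"
  by (simp add: hyp_metric_def lam_def vec_eq_iff)

lemma minv_hyp:
  fixes x :: "real^'m::finite"
  assumes "norm x < 1"
  shows "metric_inv hyp_metric x k l = (if k = l then 1 / lam x else 0)"
proof -
  have "lam x \<noteq> 0" using lam_pos[OF assms] by simp
  then have eq: "matrix_inv (\<chi> (a::'m) b. if a = b then lam x else 0) = (\<chi> a b. if a = b then 1 / lam x else 0)"
    using matrix_inv_diag[of "\<lambda>_::'m. lam x"] by simp
  show ?thesis unfolding metric_inv_def hyp_matrix eq by simp
qed

definition dP :: "real^('m::finite) option \<Rightarrow> 'm option \<Rightarrow> real" where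
  "dP p a = (case a of Some _ \<Rightarrow> lam (base_pt p) | None \<Rightarrow> 1)"

lemma prod_matrix: "(\<chi> a b. prod_metric p a b) = (\<chi> a b. if a = b then dP p a else 0)"
  by (auto simp: prod_metric_def hyp_metric_def lam_def dP_def vec_eq_iff split: option.split)

lemma dP_nz: "norm (base_pt p) < 1 \<Longrightarrow> dP p a \<noteq> 0"
  using lam_pos[of "base_pt p"] by (auto simp: dP_def split: option.split)

lemma minv_prod:
  fixes p :: "real^('m::finite) option"
  assumes "norm (base_pt p) < 1"
  shows "metric_inv prod_metric p a b = (if a = b then 1 / dP p a else 0)"
proof -
  have eq: "matrix_inv (\<chi> (a::'m option) b. if a = b then dP p a else 0) = (\<chi> a b. if a = b then 1 / dP p a else 0)"
    by (rule matrix_inv_diag) (rule dP_nz[OF assms])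
  show ?thesis unfolding metric_inv_def prod_matrix eq by simp
qed

lemma metric_inner_prod:
  "metric_inner prod_metric p v w = lam (base_pt p) * (\<Sum>k\<in>UNIV. v $ Some k * w $ Some k) + v $ None * w $ None"
proof -
  have "metric_inner prod_metric p v w = (\<Sum>a\<in>UNIV. \<Sum>b\<in>UNIV. (if a = b then dP p a else 0) * v $ a * w $ b)"
    unfolding metric_inner_def using prod_matrix[of p] by (simp add: vec_eq_iff)
  also have "\<dots> = (\<Sum>a\<in>UNIV. dP p a * v $ a * w $ a)"
  proof (rule sum.cong[OF refl])
    fix a
    have "(\<Sum>b\<in>UNIV. (if a = b then dP p a else 0) * v $ a * w $ b) = (\<Sum>b\<in>UNIV. if b = a then dP p a * v $ a * w $ b else 0)"
      by (rule sum.cong) auto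
    then show "(\<Sum>b\<in>UNIV. (if a = b then dP p a else 0) * v $ a * w $ b) = dP p a * v $ a * w $ a" by simp
  qed
  also have "\<dots> = lam (base_pt p) * (\<Sum>k\<in>UNIV. v $ Some k * w $ Some k) + v $ None * w $ None"
    by (simp add: sum_option dP_def sum_distrib_left algebra_simps)
  finally show ?thesis .
qed

lemma metric_inner_hyp:
  "metric_inner hyp_metric x v w = lam x * (\<Sum>k\<in>UNIV. v $ k * w $ k)"
proof -
  have "metric_inner hyp_metric x v w = (\<Sum>a\<in>UNIV. \<Sum>b\<in>UNIV. (if a = b then lam x else 0) * v $ a * w $ b)"
    unfolding metric_inner_def using hyp_matrix[of x] by (simp add: vec_eq_iff)
  also have "\<dots> = (\<Sum>a\<in>UNIV. lam x * v $ a * w $ a)"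
  proof (rule sum.cong[OF refl])
    fix a
    have "(\<Sum>b\<in>UNIV. (if a = b then lam x else 0) * v $ a * w $ b) = (\<Sum>b\<in>UNIV. if b = a then lam x * v $ a * w $ b else 0)"
      by (rule sum.cong) auto
    then show "(\<Sum>b\<in>UNIV. (if a = b then lam x else 0) * v $ a * w $ b) = lam x * v $ a * w $ a" by simp
  qed
  finally show ?thesis by (simp add: sum_distrib_left algebra_simps)
qed

definition DL :: "real^('m::finite) \<Rightarrow> 'm option \<Rightarrow> real" where
  "DL x e = (case e of None \<Rightarrow> 0 | Some k \<Rightarrow> 16 * x $ k / (1 - (norm x)\<^sup>2) ^ 3)"

lemma dprod:
  assumes p: "norm (base_pt p) < 1"
  shows "partial (\<lambda>q. prod_metric q a b) e p = (if a = b \<and> a \<noteq> None then DL (base_pt p) e else 0)"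
proof (cases "a = b \<and> a \<noteq> None")
  case True
  then obtain i where ab: "a = Some i" "b = Some i" by auto
  have f: "(\<lambda>q. prod_metric q a b) = (\<lambda>q. (\<lambda>v. 4 / (1 - v)\<^sup>2) (norm (base_pt q) ^ 2))"
    using ab by (simp add: prod_metric_def hyp_metric_def)
  show ?thesis
  proof (cases e)
    case None
    have "partial (\<lambda>q. prod_metric q a b) e p = 0"
      unfolding f partial_def None base_line_None by simp
    then show ?thesis using True None by (simp add: DL_def)
  next
    case (Some k)
    define x where "x = base_pt p"
    have u: "norm x ^ 2 < 1" using p normsq_lt1 by (simp add: x_def)
    have dh: "((\<lambda>v. 4 / (1 - v)\<^sup>2) has_real_derivative 8 / (1 - norm x ^ 2) ^ 3) (at (norm x ^ 2))"
    proof -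
      have v: "1 - norm x ^ 2 \<noteq> 0" using u by simp
      show ?thesis using v by (auto intro!: derivative_eq_intros simp: divide_simps power2_eq_square power3_eq_cube)
    qed
    have "((\<lambda>t. (\<lambda>v. 4 / (1 - v)\<^sup>2) (norm (x + t *\<^sub>R axis k 1) ^ 2)) has_real_derivative
        8 / (1 - norm x ^ 2) ^ 3 * (2 * x $ k)) (at 0)"
      by (rule line_deriv_rad[OF dh])
    then have "partial (\<lambda>q. prod_metric q a b) e p = 8 / (1 - norm x ^ 2) ^ 3 * (2 * x $ k)"
      unfolding f Some by (intro partial_eqI) (simp add: base_line_Some x_def)
    then show ?thesis using ab Some by (simp add: DL_def x_def)
  qed
next
  case False
  then have "(\<lambda>q. prod_metric q a b) = (\<lambda>q. if a = None \<and> b = None then 1 else 0)"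
    by (auto simp: prod_metric_def hyp_metric_def split: option.split)
  then have "partial (\<lambda>q. prod_metric q a b) e p = 0" by (simp add: partial_const)
  then show ?thesis using False by auto
qed

lemma chr:
  fixes p :: "real^('m::finite) option"
  assumes p: "norm (base_pt p) < 1"
  shows "christoffel prod_metric p a b c = (1/2) * (1 / dP p a) *
    ((if a = c \<and> a \<noteq> None then DL (base_pt p) b else 0) + (if b = a \<and> b \<noteq> None then DL (base_pt p) c else 0)
     - (if b = c \<and> b \<noteq> None then DL (base_pt p) a else 0))"
proof -
  define T where "T l = (if l = c \<and> l \<noteq> None then DL (base_pt p) b else 0) + (if b = l \<and> b \<noteq> None then DL (base_pt p) c else 0)
     - (if b = c \<and> b \<noteq> None then DL (base_pt p) l else 0)" for l
  have "christoffel prod_metric p a b c = (1/2) * (\<Sum>l\<in>UNIV. (if a = l then 1 / dP p a else 0) * T l)"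
    unfolding christoffel_def minv_prod[OF p] dprod[OF p] T_def by simp
  also have "(\<Sum>l\<in>UNIV. (if a = l then 1 / dP p a else 0) * T l) = (\<Sum>l\<in>UNIV. if l = a then 1 / dP p a * T a else 0)"
    by (rule sum.cong) auto
  finally show ?thesis by (simp add: T_def)
qed

lemma sum_onehot:
  fixes h :: "'m::finite option \<Rightarrow> real"
  shows "(\<Sum>c\<in>UNIV. h c * (case c of Some k \<Rightarrow> (if k = i then 1 else 0) | None \<Rightarrow> w)) = h None * w + h (Some i)"
proof -
  have "(\<Sum>k\<in>UNIV. h (Some k) * (if k = i then 1 else 0)) = (\<Sum>k\<in>UNIV. if k = i then h (Some i) else 0)"
    by (rule sum.cong) auto
  then show ?thesis by (simp add: sum_option)
qed


definition Efun :: "real \<Rightarrow> real \<Rightarrow> real \<Rightarrow> real \<Rightarrow> real" where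
  "Efun mm u g1 g2 = (let L = 4 / (1 - u)\<^sup>2; p = 2 * g1; W = sqrt (1 + p\<^sup>2 * u / L);
     \<mu> = 16 / (1 - u) ^ 3; \<alpha> = 2 * g1 + p * \<mu> * u / (2 * L); \<beta> = 4 * g2 - p * \<mu> / L;
     A = 1 / L; B = - (p\<^sup>2 / (L * (L + p\<^sup>2 * u)))
   in (mm * A * \<alpha> + u * (A * \<beta> + B * \<alpha>) + u\<^sup>2 * B * \<beta>) / W)"

locale geo =
  fixes F :: "real^('m::finite) \<Rightarrow> real" and G G1 G2 :: "real \<Rightarrow> real" and K0 :: real
  assumes F_eq: "\<And>y. norm y < 1 \<Longrightarrow> F y = G ((norm y)\<^sup>2) + K0"
    and dG: "\<And>u. 0 \<le> u \<Longrightarrow> u < 1 \<Longrightarrow> (G has_real_derivative G1 u) (at u)"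
    and dG1: "\<And>u. 0 \<le> u \<Longrightarrow> u < 1 \<Longrightarrow> (G1 has_real_derivative G2 u) (at u)"
begin

lemma pF:
  assumes x: "norm x < 1"
  shows "partial F l x = G1 ((norm x)\<^sup>2) * (2 * x $ l)"
proof -
  have "partial F l x = partial (\<lambda>y. G ((norm y)\<^sup>2) + K0) l x"
    by (rule partial_cong[of "ball 0 1"]) (use x F_eq in auto)
  also have "\<dots> = G1 ((norm x)\<^sup>2) * (2 * x $ l) + 0"
    by (rule partial_eqI, rule DERIV_add[OF line_deriv_rad DERIV_const], rule dG)
       (use normsq_lt1[OF x] in auto)
  finally show ?thesis by simp
qed

lemma ppF:
  assumes x: "norm x < 1"
  shows "partial (\<lambda>y. partial F j y) i x =
    G2 ((norm x)\<^sup>2) * (2 * x $ i) * (2 * x $ j) + G1 ((norm x)\<^sup>2) * (2 * (if j = i then 1 else 0))"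
proof -
  have "partial (\<lambda>y. partial F j y) i x = partial (\<lambda>y. G1 ((norm y)\<^sup>2) * (2 * y $ j)) i x"
    by (rule partial_cong[of "ball 0 1"]) (use x pF in auto)
  also have "\<dots> = G2 ((norm x)\<^sup>2) * (2 * x $ i) * (2 * x $ j) + G1 ((norm x)\<^sup>2) * (2 * (if j = i then 1 else 0))"
  proof (rule partial_eqI)
    have d1: "((\<lambda>t. G1 (norm (x + t *\<^sub>R axis i 1) ^ 2)) has_real_derivative G2 ((norm x)\<^sup>2) * (2 * x $ i)) (at 0)"
      by (rule line_deriv_rad, rule dG1) (use normsq_lt1[OF x] in auto)
    have d2: "((\<lambda>t. 2 * (x + t *\<^sub>R axis i 1) $ j) has_real_derivative 2 * (if j = i then 1 else 0)) (at 0)"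
      by (rule DERIV_cmult, rule line_deriv_coord)
    show "((\<lambda>t. G1 ((norm (x + t *\<^sub>R axis i 1))\<^sup>2) * (2 * (x + t *\<^sub>R axis i 1) $ j)) has_real_derivative
        G2 ((norm x)\<^sup>2) * (2 * x $ i) * (2 * x $ j) + G1 ((norm x)\<^sup>2) * (2 * (if j = i then 1 else 0))) (at 0)"
    proof (rule DERIV_cong[OF DERIV_mult[OF d1 d2]])
      show "G2 ((norm x)\<^sup>2) * (2 * x $ i) * (2 * (x + 0 *\<^sub>R axis i 1) $ j) +
          2 * (if j = i then 1 else 0) * G1 ((norm (x + 0 *\<^sub>R axis i 1))\<^sup>2) =
          G2 ((norm x)\<^sup>2) * (2 * x $ i) * (2 * x $ j) + G1 ((norm x)\<^sup>2) * (2 * (if j = i then 1 else 0))"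
        by simp
    qed
  qed
  finally show ?thesis .
qed

lemma dgraph_eq:
  assumes x: "norm x < 1"
  shows "dgraph F i x = (\<chi> a. case a of Some k \<Rightarrow> (if k = i then 1 else 0) | None \<Rightarrow> G1 ((norm x)\<^sup>2) * (2 * x $ i))"
  by (auto simp: vec_eq_iff dgraph_def partial_coord pF[OF x] split: option.split)

lemma ddgraph_eq:
  assumes x: "norm x < 1"
  shows "ddgraph F i j x = (\<chi> a. case a of Some k \<Rightarrow> 0 | None \<Rightarrow>
     G2 ((norm x)\<^sup>2) * (2 * x $ i) * (2 * x $ j) + G1 ((norm x)\<^sup>2) * (2 * (if j = i then 1 else 0)))"
proof -
  have "partial (\<lambda>y. partial (\<lambda>z. z $ k) j y) i x = 0" for k
  proof -
    have "(\<lambda>y. partial (\<lambda>z. z $ k) j y) = (\<lambda>y::real^'m. if k = j then 1 else 0)"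
      by (simp add: partial_coord)
    then show ?thesis by (simp add: partial_const)
  qed
  then show ?thesis
    by (auto simp: vec_eq_iff ddgraph_def ppF[OF x] split: option.split)
qed

lemma sumsq: "(\<Sum>k\<in>UNIV. x $ k * x $ k) = (norm (x::real^'m))\<^sup>2"
  by (simp add: power2_norm_eq_inner inner_vec_def)

lemma amb_eq:
  assumes x: "norm x < 1"
  shows "amb_cov F i j x = (\<chi> a. case a of
      None \<Rightarrow> G2 ((norm x)\<^sup>2) * (2 * x $ i) * (2 * x $ j) + G1 ((norm x)\<^sup>2) * (2 * (if j = i then 1 else 0))
    | Some k \<Rightarrow> (1/2) * (1 / lam x) * ((if k = j then DL x (Some i) else 0) + (if i = k then DL x (Some j) else 0)
         - (if i = j then DL x (Some k) else 0)))"
proof -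
  define p0 where "p0 = graph_map F x"
  have b: "base_pt p0 = x" by (simp add: p0_def)
  have bx: "norm (base_pt p0) < 1" using x b by simp
  define C where "C a b c = christoffel prod_metric p0 a b c" for a b c
  define wv where "wv i = G1 ((norm x)\<^sup>2) * (2 * x $ i)" for i
  have dg: "dgraph F i x $ c = (case c of Some k \<Rightarrow> (if k = i then 1 else 0) | None \<Rightarrow> wv i)" for i c
    by (simp add: dgraph_eq[OF x] wv_def split: option.split)
  have inner: "(\<Sum>b\<in>UNIV. \<Sum>c\<in>UNIV. C a b c * dgraph F i x $ b * dgraph F j x $ c) = C a (Some i) (Some j)
      + C a None (Some j) * wv i + C a (Some i) None * wv j + C a None None * wv i * wv j" for a
  proof -
    have "(\<Sum>b\<in>UNIV. \<Sum>c\<in>UNIV. C a b c * dgraph F i x $ b * dgraph F j x $ c) =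
        (\<Sum>b\<in>UNIV. (C a b None * wv j + C a b (Some j)) * dgraph F i x $ b)"
    proof (rule sum.cong[OF refl])
      fix b
      have "(\<Sum>c\<in>UNIV. C a b c * dgraph F i x $ b * dgraph F j x $ c) =
          (\<Sum>c\<in>UNIV. (C a b c * dgraph F i x $ b) * (case c of Some k \<Rightarrow> (if k = j then 1 else 0) | None \<Rightarrow> wv j))"
        by (simp add: dg)
      also have "\<dots> = (C a b None * wv j + C a b (Some j)) * dgraph F i x $ b"
        unfolding sum_onehot by (simp add: algebra_simps)
      finally show "(\<Sum>c\<in>UNIV. C a b c * dgraph F i x $ b * dgraph F j x $ c) = (C a b None * wv j + C a b (Some j)) * dgraph F i x $ b" .
    qed
    also have "\<dots> = (\<Sum>b\<in>UNIV. (C a b None * wv j + C a b (Some j)) * (case b of Some k \<Rightarrow> (if k = i then 1 else 0) | None \<Rightarrow> wv i))"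
      by (simp add: dg)
    also have "\<dots> = (C a None None * wv j + C a None (Some j)) * wv i + (C a (Some i) None * wv j + C a (Some i) (Some j))"
      by (rule sum_onehot)
    finally show ?thesis by (simp add: algebra_simps)
  qed
  have Cv: "C a b c = (1/2) * (1 / dP p0 a) *
    ((if a = c \<and> a \<noteq> None then DL x b else 0) + (if b = a \<and> b \<noteq> None then DL x c else 0)
     - (if b = c \<and> b \<noteq> None then DL x a else 0))" for a b c
    unfolding C_def chr[OF bx] b ..
  show ?thesis
    unfolding amb_cov_def p0_def[symmetric] C_def[symmetric] inner
    by (auto simp: vec_eq_iff inner ddgraph_eq[OF x] Cv DL_def dP_def b split: option.split)
qed

lemma quad_sum:
  fixes v :: "'m \<Rightarrow> real"
  shows "(\<Sum>i\<in>UNIV. \<Sum>j\<in>UNIV. (A * (if i = j then 1 else 0) + B * v i * v j) * (C * (if i = j then 1 else 0) + D * v i * v j))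
    = real CARD('m) * A * C + (\<Sum>k\<in>UNIV. v k * v k) * (A * D + B * C) + (\<Sum>k\<in>UNIV. v k * v k)\<^sup>2 * B * D"
proof -
  have "(\<Sum>j\<in>UNIV. (A * (if i = j then 1 else 0) + B * v i * v j) * (C * (if i = j then 1 else 0) + D * v i * v j))
      = A * C + (A * D + B * C) * (v i * v i) + B * D * (v i * v i) * (\<Sum>k\<in>UNIV. v k * v k)" for i
  proof -
    have "(\<Sum>j\<in>UNIV. (A * (if i = j then 1 else 0) + B * v i * v j) * (C * (if i = j then 1 else 0) + D * v i * v j))
      = (\<Sum>j\<in>UNIV. (if j = i then A * C + (A * D + B * C) * (v i * v i) else 0) + B * D * (v i * v i) * (v j * v j))"
      by (rule sum.cong) (auto simp: algebra_simps)
    also have "\<dots> = A * C + (A * D + B * C) * (v i * v i) + B * D * (v i * v i) * (\<Sum>k\<in>UNIV. v k * v k)"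
      by (simp add: sum.distrib sum_distrib_left)
    finally show ?thesis .
  qed
  then have "(\<Sum>i\<in>UNIV. \<Sum>j\<in>UNIV. (A * (if i = j then 1 else 0) + B * v i * v j) * (C * (if i = j then 1 else 0) + D * v i * v j))
     = (\<Sum>i\<in>UNIV. A * C + (A * D + B * C) * (v i * v i) + B * D * (\<Sum>k\<in>UNIV. v k * v k) * (v i * v i))"
    by (simp add: algebra_simps)
  also have "\<dots> = (\<Sum>i\<in>(UNIV::'m set). A * C) + (A * D + B * C) * (\<Sum>i\<in>UNIV. v i * v i) + (B * D * (\<Sum>k\<in>UNIV. v k * v k)) * (\<Sum>i\<in>UNIV. v i * v i)"
    by (simp only: sum.distrib sum_distrib_left)
  also have "\<dots> = real CARD('m) * A * C + (\<Sum>k\<in>UNIV. v k * v k) * (A * D + B * C) + (\<Sum>k\<in>UNIV. v k * v k)\<^sup>2 * B * D"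
    by (simp add: power2_eq_square algebra_simps)
  finally show ?thesis .
qed

lemma geo_main:
  assumes x: "norm x < 1"
  shows "real CARD('m) * metric_inner prod_metric (graph_map F x) (mean_curv_vec F x) (graph_normal F x)
     = Efun (real CARD('m)) ((norm x)\<^sup>2) (G1 ((norm x)\<^sup>2)) (G2 ((norm x)\<^sup>2))"
proof -
  define u where "u = (norm x)\<^sup>2"
  define g1 where "g1 = G1 u"
  define g2 where "g2 = G2 u"
  define L where "L = lam x"
  define p where "p = 2 * g1"
  define \<mu> where "\<mu> = 16 / (1 - u) ^ 3"
  define W where "W = sqrt (1 + p\<^sup>2 * u / L)"
  define \<alpha> where "\<alpha> = 2 * g1 + p * \<mu> * u / (2 * L)"
  define \<beta> where "\<beta> = 4 * g2 - p * \<mu> / L"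
  define A where "A = 1 / L"
  define B where "B = - (p\<^sup>2 / (L * (L + p\<^sup>2 * u)))"
  define p0 where "p0 = graph_map F x"
  have u1: "u < 1" "0 \<le> u" using normsq_lt1[OF x] by (auto simp: u_def)
  have L: "L = 4 / (1 - u)\<^sup>2" "L > 0" using lam_pos[OF x] by (auto simp: L_def lam_def u_def)
  have usum: "(\<Sum>k\<in>UNIV. x $ k * x $ k) = u" by (simp add: sumsq u_def)
  have b0: "base_pt p0 = x" by (simp add: p0_def)
  have Lp: "L + p\<^sup>2 * u > 0" using L u1 by (simp add: add_pos_nonneg)
  have hg: "hyp_grad F x $ k = p * x $ k / L" for k
  proof -
    have "hyp_grad F x $ k = (\<Sum>l\<in>UNIV. (if k = l then 1 / lam x else 0) * (G1 u * (2 * x $ l)))"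
      by (simp add: hyp_grad_def minv_hyp[OF x] pF[OF x] u_def)
    also have "\<dots> = (\<Sum>l\<in>UNIV. if l = k then 1 / lam x * (G1 u * (2 * x $ k)) else 0)"
      by (rule sum.cong) auto
    finally show ?thesis by (simp add: p_def g1_def L_def)
  qed
  have hgn: "(hyp_grad_norm F x)\<^sup>2 = p\<^sup>2 * u / L"
  proof -
    have "metric_inner hyp_metric x (hyp_grad F x) (hyp_grad F x) = L * (\<Sum>k\<in>UNIV. (p / L)\<^sup>2 * (x $ k * x $ k))"
      unfolding metric_inner_hyp hg L_def[symmetric] by (simp add: power2_eq_square algebra_simps)
    also have "(\<Sum>k\<in>UNIV. (p / L)\<^sup>2 * (x $ k * x $ k)) = (p / L)\<^sup>2 * u"
      by (simp add: sum_distrib_left[symmetric] usum)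
    also have "L * ((p / L)\<^sup>2 * u) = p\<^sup>2 * u / L" using L(2) by (simp add: power2_eq_square field_simps)
    finally have e: "metric_inner hyp_metric x (hyp_grad F x) (hyp_grad F x) = p\<^sup>2 * u / L" .
    have "p\<^sup>2 * u / L \<ge> 0" using L u1 by simp
    then show ?thesis unfolding hyp_grad_norm_def e by simp
  qed
  have W: "W > 0" "W\<^sup>2 = 1 + p\<^sup>2 * u / L" using L u1 by (auto simp: W_def add_pos_nonneg)
  have nu: "graph_normal F x = (\<chi> a. case a of Some k \<Rightarrow> - (p * x $ k / L) / W | None \<Rightarrow> 1 / W)"
    by (auto simp: vec_eq_iff graph_normal_def hgn hg W_def split: option.split)
  have nunu: "metric_inner prod_metric p0 (graph_normal F x) (graph_normal F x) = 1"
  proof -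
    have "metric_inner prod_metric p0 (graph_normal F x) (graph_normal F x) =
        L * (\<Sum>k\<in>UNIV. (p / (L * W))\<^sup>2 * (x $ k * x $ k)) + 1 / W\<^sup>2"
      unfolding metric_inner_prod b0 nu L_def[symmetric] by (simp add: power2_eq_square algebra_simps)
    also have "(\<Sum>k\<in>UNIV. (p / (L * W))\<^sup>2 * (x $ k * x $ k)) = (p / (L * W))\<^sup>2 * u"
      by (simp add: sum_distrib_left[symmetric] usum)
    also have "L * ((p / (L * W))\<^sup>2 * u) + 1 / W\<^sup>2 = (p\<^sup>2 * u / L + 1) / W\<^sup>2"
      using L(2) W(1) by (simp add: power2_eq_square field_simps)
    also have "\<dots> = 1"
    proof -
      have pos: "1 + p\<^sup>2 * u / L > 0" using L(2) u1 by (simp add: add_pos_nonneg)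
      show ?thesis using W(2) pos by (simp add: add.commute)
    qed
    finally show ?thesis .
  qed
  have ind: "(\<chi> a b. ind_metric F x a b) = (\<chi> i j. L * (if i = j then 1 else 0) + p\<^sup>2 * x $ i * x $ j)"
  proof -
    have "ind_metric F x i j = L * (if i = j then 1 else 0) + p\<^sup>2 * x $ i * x $ j" for i j
    proof -
      have "ind_metric F x i j = L * (\<Sum>k\<in>UNIV. (if k = i then 1 else 0) * (if k = j then 1 else 0)) + (g1 * (2 * x $ i)) * (g1 * (2 * x $ j))"
        unfolding ind_metric_def metric_inner_prod by (simp add: dgraph_eq[OF x] L_def u_def g1_def)
      also have "(\<Sum>k\<in>UNIV. (if k = i then 1 else 0) * (if k = j then 1 else (0::real))) = (\<Sum>k\<in>UNIV. if k = i then (if i = j then 1 else 0) else 0)"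
        by (rule sum.cong) auto
      finally show ?thesis by (simp add: p_def power2_eq_square algebra_simps)
    qed
    then show ?thesis by (simp add: vec_eq_iff)
  qed
  have minv: "metric_inv (ind_metric F) x i j = A * (if i = j then 1 else 0) + B * x $ i * x $ j" for i j
  proof -
    have "matrix_inv (\<chi> i j. L * (if i = j then 1 else 0) + p\<^sup>2 * x $ i * x $ j) = (\<chi> i j. A * (if i = j then 1 else 0) + B * x $ i * x $ j)"
    proof (rule matrix_inv_rank1)
      show "L * A = 1" using L by (simp add: A_def)
      show "L * B + p\<^sup>2 * A + p\<^sup>2 * B * (\<Sum>k\<in>UNIV. x $ k * x $ k) = 0"
      proof -
        have nz: "L + p\<^sup>2 * u \<noteq> 0" using Lp by simp
        have "B * (L + p\<^sup>2 * u) = - ((p\<^sup>2 * (L + p\<^sup>2 * u)) / (L * (L + p\<^sup>2 * u)))"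
          unfolding B_def by simp
        also have "(p\<^sup>2 * (L + p\<^sup>2 * u)) / (L * (L + p\<^sup>2 * u)) = p\<^sup>2 / L"
          by (rule nonzero_mult_divide_mult_cancel_right[OF nz])
        finally have e1: "B * (L + p\<^sup>2 * u) = - (p\<^sup>2 / L)" .
        have "L * B + p\<^sup>2 * A + p\<^sup>2 * B * u = B * (L + p\<^sup>2 * u) + p\<^sup>2 * A" by (simp add: algebra_simps)
        also have "\<dots> = 0" unfolding e1 A_def by simp
        finally show ?thesis unfolding usum .
      qed
    qed
    then show ?thesis unfolding metric_inv_def ind by simp
  qed
  have sij: "metric_inner prod_metric p0 (amb_cov F i j x) (graph_normal F x) = (\<alpha> * (if i = j then 1 else 0) + \<beta> * x $ i * x $ j) / W" for i j
  proof -
    define a where "a k = (1/2) * (1 / L) * ((if k = j then \<mu> * x $ i else 0) + (if i = k then \<mu> * x $ j else 0) - (if i = j then \<mu> * x $ k else 0))" for k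
    have am: "amb_cov F i j x $ Some k = a k" for k
      by (simp add: amb_eq[OF x] a_def DL_def L_def \<mu>_def u_def)
    have an: "amb_cov F i j x $ None = g2 * (2 * x $ i) * (2 * x $ j) + g1 * (2 * (if j = i then 1 else 0))"
      by (simp add: amb_eq[OF x] g1_def g2_def u_def)
    have sa: "(\<Sum>k\<in>UNIV. a k * x $ k) = \<mu> / (2 * L) * (2 * x $ i * x $ j - (if i = j then 1 else 0) * u)"
    proof -
      define K where "K = \<mu> / (2 * L) * (if i = j then 1 else 0)"
      define c1 where "c1 = \<mu> / (2 * L) * x $ i * x $ j"
      define c2 where "c2 = \<mu> / (2 * L) * x $ j * x $ i"
      have "(\<Sum>k\<in>UNIV. a k * x $ k) = (\<Sum>k\<in>UNIV. (if k = j then c1 else 0) + (if k = i then c2 else 0) - K * (x $ k * x $ k))"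
        by (rule sum.cong) (auto simp: a_def algebra_simps K_def c1_def c2_def)
      also have "\<dots> = (\<Sum>k\<in>UNIV. (if k = j then c1 else 0)) + (\<Sum>k\<in>UNIV. (if k = i then c2 else 0)) - K * (\<Sum>k\<in>UNIV. x $ k * x $ k)"
        by (simp only: sum_subtractf sum.distrib sum_distrib_left)
      also have "\<dots> = \<mu> / (2 * L) * x $ i * x $ j + \<mu> / (2 * L) * x $ j * x $ i - \<mu> / (2 * L) * (if i = j then 1 else 0) * u"
        unfolding usum by (simp add: K_def c1_def c2_def)
      finally show ?thesis by (simp add: algebra_simps)
    qed
    have "metric_inner prod_metric p0 (amb_cov F i j x) (graph_normal F x) =
        L * (\<Sum>k\<in>UNIV. a k * (- (p * x $ k / L) / W)) + (g2 * (2 * x $ i) * (2 * x $ j) + g1 * (2 * (if j = i then 1 else 0))) * (1 / W)"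
      unfolding metric_inner_prod b0 am an nu L_def[symmetric] by simp
    also have "L * (\<Sum>k\<in>UNIV. a k * (- (p * x $ k / L) / W)) = - (p / W) * (\<Sum>k\<in>UNIV. a k * x $ k)"
      using L by (simp add: sum_distrib_left sum_negf algebra_simps)
    also have "- (p / W) * (\<Sum>k\<in>UNIV. a k * x $ k) + (g2 * (2 * x $ i) * (2 * x $ j) + g1 * (2 * (if j = i then 1 else 0))) * (1 / W)
        = (\<alpha> * (if i = j then 1 else 0) + \<beta> * x $ i * x $ j) / W"
      unfolding sa \<alpha>_def \<beta>_def using L(2) W(1) by (cases "i = j") (simp_all add: field_simps)
    finally show ?thesis .
  qed
  define S where "S = (\<Sum>i\<in>UNIV. \<Sum>j\<in>UNIV. metric_inv (ind_metric F) x i j * metric_inner prod_metric p0 (amb_cov F i j x) (graph_normal F x))"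
  have sv: "(\<Sum>i\<in>UNIV. \<Sum>j\<in>UNIV. metric_inv (ind_metric F) x i j *\<^sub>R sff F i j x) = S *\<^sub>R graph_normal F x"
    unfolding S_def sff_def p0_def by (simp add: scaleR_sum_left scaleR_scaleR)
  have mc: "mean_curv_vec F x = (S / real CARD('m)) *\<^sub>R graph_normal F x"
    unfolding mean_curv_vec_def sv by simp
  have lin: "metric_inner prod_metric p0 (t *\<^sub>R v) w = t * metric_inner prod_metric p0 v w" for t v w
    unfolding metric_inner_prod by (simp add: sum_distrib_left algebra_simps)
  have "real CARD('m) * metric_inner prod_metric p0 (mean_curv_vec F x) (graph_normal F x) = S"
    unfolding mc lin nunu by simp
  also have "S = (\<Sum>i\<in>UNIV. \<Sum>j\<in>UNIV. (A * (if i = j then 1 else 0) + B * x $ i * x $ j) * (\<alpha> / W * (if i = j then 1 else 0) + \<beta> / W * x $ i * x $ j))"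
    unfolding S_def minv sij by (simp add: add_divide_distrib)
  also have "\<dots> = real CARD('m) * A * (\<alpha> / W) + u * (A * (\<beta> / W) + B * (\<alpha> / W)) + u\<^sup>2 * B * (\<beta> / W)"
    unfolding quad_sum usum by simp
  also have "\<dots> = Efun (real CARD('m)) u g1 g2"
    unfolding Efun_def Let_def L(1)[symmetric] p_def[symmetric] \<mu>_def[symmetric] W_def[symmetric]
      A_def[symmetric] B_def[symmetric]
    using W(1) L(2) by (simp add: \<alpha>_def \<beta>_def p_def field_simps)
  finally show ?thesis by (simp add: p0_def u_def g1_def g2_def)
qed

end


lemma Efun_alg:
  fixes mm u c z z1 S :: real
  assumes u: "0 \<le> u" "u < 1"
    and S: "S > 0" "S\<^sup>2 = 1 - c\<^sup>2 * (((1 + u) / (1 - u))\<^sup>2 - 1) * z\<^sup>2"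
    and ode: "mm * ((1 + u) / (1 - u)) * z + (((1 + u) / (1 - u))\<^sup>2 - 1) * z1 = 1"
  shows "Efun mm u ((c * z / S) * (2 / (1 - u)\<^sup>2))
     ((c * z1 / S + c * z * ((- 1 / 2) * (1 / S ^ 3) * (- (c\<^sup>2 * (2 * ((1 + u) / (1 - u)) * z\<^sup>2 + (((1 + u) / (1 - u))\<^sup>2 - 1) * (2 * z * z1))))))
        * (2 / (1 - u)\<^sup>2) * (2 / (1 - u)\<^sup>2) + (c * z / S) * (4 / (1 - u) ^ 3)) = c"
proof -
  define \<rho> where "\<rho> = (1 + u) / (1 - u)"
  define \<Phi> where "\<Phi> = c * z / S"
  define \<Phi>1 where "\<Phi>1 = c * z1 / S + c * z * ((- 1 / 2) * (1 / S ^ 3) * (- (c\<^sup>2 * (2 * \<rho> * z\<^sup>2 + (\<rho>\<^sup>2 - 1) * (2 * z * z1)))))"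
  define L where "L = 4 / (1 - u)\<^sup>2"
  define g1 where "g1 = \<Phi> * (2 / (1 - u)\<^sup>2)"
  define g2 where "g2 = \<Phi>1 * (2 / (1 - u)\<^sup>2) * (2 / (1 - u)\<^sup>2) + \<Phi> * (4 / (1 - u) ^ 3)"
  define p where "p = 2 * g1"
  define \<mu> where "\<mu> = 16 / (1 - u) ^ 3"
  define W where "W = sqrt (1 + p\<^sup>2 * u / L)"
  define \<alpha> where "\<alpha> = 2 * g1 + p * \<mu> * u / (2 * L)"
  define \<beta> where "\<beta> = 4 * g2 - p * \<mu> / L"
  define A where "A = 1 / L"
  define B where "B = - (p\<^sup>2 / (L * (L + p\<^sup>2 * u)))"
  have u1: "1 - u > 0" using u by simp
  have L0: "L > 0" using u1 by (simp add: L_def)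
  have r2: "\<rho>\<^sup>2 - 1 = u * L"
  proof -
    have d: "(1 - u)\<^sup>2 \<noteq> 0" using u1 by simp
    have "\<rho>\<^sup>2 - 1 = ((1 + u)\<^sup>2 - (1 - u)\<^sup>2) / (1 - u)\<^sup>2"
      using d by (simp add: \<rho>_def power_divide diff_divide_distrib)
    also have "(1 + u)\<^sup>2 - (1 - u)\<^sup>2 = 4 * u" by (simp add: power2_eq_square algebra_simps)
    finally show ?thesis by (simp add: L_def)
  qed
  have pL: "p = L * \<Phi>" by (simp add: p_def g1_def L_def)
  have Wsq: "1 + p\<^sup>2 * u / L = 1 / S\<^sup>2"
  proof -
    have "1 + p\<^sup>2 * u / L = 1 + (\<rho>\<^sup>2 - 1) * \<Phi>\<^sup>2" unfolding pL r2 using L0 by (simp add: power2_eq_square field_simps)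
    also have "\<dots> = (S\<^sup>2 + c\<^sup>2 * (\<rho>\<^sup>2 - 1) * z\<^sup>2) / S\<^sup>2" using S(1) by (simp add: \<Phi>_def power2_eq_square field_simps)
    also have "\<dots> = 1 / S\<^sup>2" using S(2) by (simp add: \<rho>_def)
    finally show ?thesis .
  qed
  have W: "W = 1 / S" unfolding W_def Wsq using S(1) by (simp add: real_sqrt_divide)
  have al: "\<alpha> = L * \<Phi> * \<rho>"
  proof -
    have gen: "(16 / d ^ 3) / (2 * (4 / d\<^sup>2)) = 2 / d" if "d > 0" for d :: real
      using that by (simp add: field_simps power2_eq_square power3_eq_cube)
    have m2: "\<mu> / (2 * L) = 2 / (1 - u)" unfolding \<mu>_def L_def by (rule gen[OF u1])
    have "\<alpha> = p + p * u * (\<mu> / (2 * L))" by (simp add: \<alpha>_def p_def)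
    also have "\<dots> = L * \<Phi> * (1 + 2 * u / (1 - u))" unfolding m2 pL by (simp add: algebra_simps)
    also have "1 + 2 * u / (1 - u) = \<rho>" using u1 by (simp add: \<rho>_def field_simps)
    finally show ?thesis .
  qed
  have be: "\<beta> = L\<^sup>2 * \<Phi>1"
  proof -
    have gen: "4 * (\<Phi>1 * (2 / d\<^sup>2) * (2 / d\<^sup>2) + \<Phi> * (4 / d ^ 3)) - (4 / d\<^sup>2) * \<Phi> * (16 / d ^ 3) / (4 / d\<^sup>2)
        = (4 / d\<^sup>2)\<^sup>2 * \<Phi>1" if "d > 0" for d :: real
      using that by (simp add: field_simps power2_eq_square power3_eq_cube)
    show ?thesis unfolding \<beta>_def pL \<mu>_def g2_def L_def by (rule gen[OF u1])
  qed
  have Lp: "L + p\<^sup>2 * u > 0" using L0 u by (simp add: add_pos_nonneg)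
  have k: "1 - p\<^sup>2 / (L + p\<^sup>2 * u) * u = 1 / W\<^sup>2"
  proof -
    have "L + p\<^sup>2 * u = L * (1 + p\<^sup>2 * u / L)" using L0 by (simp add: field_simps)
    have "1 - p\<^sup>2 / (L + p\<^sup>2 * u) * u = L / (L + p\<^sup>2 * u)"
      using Lp by (simp add: field_simps)
    also have "\<dots> = 1 / (1 + p\<^sup>2 * u / L)" using L0 by (simp add: field_simps)
    finally show ?thesis unfolding W_def using L0 u by (simp add: add_pos_nonneg)
  qed
  have E1: "Efun mm u g1 g2 = ((mm - 1) * \<alpha> + (\<alpha> + u * \<beta>) * (1 / W\<^sup>2)) / (L * W)"
  proof -
    have "Efun mm u g1 g2 = (mm * A * \<alpha> + u * (A * \<beta> + B * \<alpha>) + u\<^sup>2 * B * \<beta>) / W"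
      unfolding Efun_def Let_def L_def[symmetric] p_def[symmetric] \<mu>_def[symmetric] W_def[symmetric] A_def[symmetric] B_def[symmetric]
        \<beta>_def[symmetric] by (simp add: \<alpha>_def p_def)
    also have "\<dots> = ((mm - 1) * \<alpha> + (\<alpha> + u * \<beta>) * (1 - p\<^sup>2 / (L + p\<^sup>2 * u) * u)) / (L * W)"
    proof -
      define \<kappa> where "\<kappa> = p\<^sup>2 / (L + p\<^sup>2 * u)"
      have Bk: "B = - \<kappa> * A" unfolding B_def \<kappa>_def A_def by simp
      have num: "mm * A * \<alpha> + u * (A * \<beta> + B * \<alpha>) + u\<^sup>2 * B * \<beta> = ((mm - 1) * \<alpha> + (\<alpha> + u * \<beta>) * (1 - \<kappa> * u)) * A"
        unfolding Bk by (simp add: algebra_simps power2_eq_square)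
      show ?thesis unfolding num \<kappa>_def[symmetric] by (simp add: A_def)
    qed
    finally show ?thesis unfolding k .
  qed
  have E2: "Efun mm u g1 g2 = (mm - 1) * \<rho> * \<Phi> * S + (\<rho> * \<Phi> + (\<rho>\<^sup>2 - 1) * \<Phi>1) * S ^ 3"
    unfolding E1 W al be r2 using L0 S(1) by (simp add: field_simps power2_eq_square power3_eq_cube)
  also have "\<dots> = c * (mm * \<rho> * z + (\<rho>\<^sup>2 - 1) * z1)"
  proof -
    have "(\<rho> * \<Phi> + (\<rho>\<^sup>2 - 1) * \<Phi>1) * S ^ 3 = \<rho> * c * z * S\<^sup>2 + (\<rho>\<^sup>2 - 1) * c * z1 * S\<^sup>2
        + (\<rho>\<^sup>2 - 1) * c ^ 3 * z\<^sup>2 * (\<rho> * z + (\<rho>\<^sup>2 - 1) * z1)"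
      unfolding \<Phi>_def \<Phi>1_def using S(1) by (simp add: field_simps power2_eq_square power3_eq_cube)
    also have "\<dots> = \<rho> * c * z + (\<rho>\<^sup>2 - 1) * c * z1"
      unfolding S(2) \<rho>_def[symmetric] by (simp add: algebra_simps power2_eq_square power3_eq_cube)
    finally have e: "(\<rho> * \<Phi> + (\<rho>\<^sup>2 - 1) * \<Phi>1) * S ^ 3 = \<rho> * c * z + (\<rho>\<^sup>2 - 1) * c * z1" .
    have "(mm - 1) * \<rho> * \<Phi> * S = (mm - 1) * \<rho> * c * z" using S(1) by (simp add: \<Phi>_def)
    then show ?thesis unfolding e by (simp add: algebra_simps)
  qed
  also have "\<dots> = c" using ode by (simp add: \<rho>_def)
  finally show ?thesis unfolding g1_def g2_def \<Phi>_def \<Phi>1_def \<rho>_def .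
qed


lemma smooth_on_cong:
  assumes sm: "smooth_on U \<phi>" and U: "open U" and eq0: "\<And>x. x \<in> U \<Longrightarrow> \<phi> x = \<psi> x"
  shows "smooth_on U \<psi>"
proof -
  have eq: "\<forall>x\<in>U. partials is \<phi> x = partials is \<psi> x" for "is"
  proof (induction "is")
    case Nil then show ?case using eq0 by simp
  next
    case (Cons i "is")
    show ?case
    proof
      fix x assume x: "x \<in> U"
      show "partials (i # is) \<phi> x = partials (i # is) \<psi> x"
        using partial_cong[OF U x, of "partials is \<phi>" "partials is \<psi>" i] Cons by simp
    qed
  qed
  show ?thesis
    unfolding smooth_on_def
  proof (intro allI conjI ballI)
    fix "is"
    show "continuous_on U (partials is \<psi>)"
      using sm eq[of "is"] continuous_on_cong unfolding smooth_on_def by (metis (no_types, lifting))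
    fix i x assume x: "x \<in> U"
    have "(\<lambda>t. partials is \<phi> (x + t *\<^sub>R axis i 1)) differentiable at 0"
      using sm x unfolding smooth_on_def by blast
    then obtain D where "((\<lambda>t. partials is \<phi> (x + t *\<^sub>R axis i 1)) has_real_derivative D) (at 0)"
      using real_differentiable_def by blast
    then have "((\<lambda>t. partials is \<psi> (x + t *\<^sub>R axis i 1)) has_real_derivative D) (at 0)"
      using line_deriv_cong[OF U x, of "partials is \<phi>" "partials is \<psi>"] eq[of "is"] by simp
    then show "(\<lambda>t. partials is \<psi> (x + t *\<^sub>R axis i 1)) differentiable at 0"
      using real_differentiable_def by blast
  qed
qed

context crange begin

lemma Efun_c:
  assumes u: "0 \<le> u" "u < 1"
  shows "Efun (real m) u (G1 u) (G2 u) = c"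
proof -
  define \<rho> where "\<rho> = (1 + u) / (1 - u)"
  have \<rho>1: "\<rho> \<ge> 1" using u by (simp add: \<rho>_def field_simps)
  define Q where "Q = Qf m c \<rho>"
  have Q0: "Q > 0" using Qpos \<rho>1 by (simp add: Q_def)
  define S where "S = sqrt Q"
  have S0: "S > 0" using Q0 by (simp add: S_def)
  have SQ: "S\<^sup>2 = Q" using Q0 by (simp add: S_def)
  have h: "Q powr (- 1 / 2) = 1 / S" using Q0 by (simp add: S_def powr_minus_divide powr_half_sqrt[symmetric])
  have h3: "Q powr (- 1 / 2 - 1) = 1 / S ^ 3"
  proof -
    have "S ^ 3 = Q powr (real 3 / 2)" unfolding S_def by (rule sqrt_pow_powr[OF Q0])
    then show ?thesis using Q0 by (simp add: powr_minus_divide)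
  qed
  have Phi_eq: "Phi m c \<rho> = c * zf m \<rho> / S" unfolding Phi_def Q_def[symmetric] h by simp
  have Phi1_eq: "Phi1 \<rho> = c * zd m \<rho> / S + c * zf m \<rho> * ((- 1 / 2) * (1 / S ^ 3) *
      (- (c\<^sup>2 * (2 * \<rho> * (zf m \<rho>)\<^sup>2 + (\<rho>\<^sup>2 - 1) * (2 * zf m \<rho> * zd m \<rho>)))))"
    unfolding Phi1_def Q_def[symmetric] h h3 Qd_def by simp
  have "Efun (real m) u ((c * zf m \<rho> / S) * (2 / (1 - u)\<^sup>2))
     ((c * zd m \<rho> / S + c * zf m \<rho> * ((- 1 / 2) * (1 / S ^ 3) * (- (c\<^sup>2 * (2 * ((1 + u) / (1 - u)) * (zf m \<rho>)\<^sup>2 + (((1 + u) / (1 - u))\<^sup>2 - 1) * (2 * zf m \<rho> * zd m \<rho>))))))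
        * (2 / (1 - u)\<^sup>2) * (2 / (1 - u)\<^sup>2) + (c * zf m \<rho> / S) * (4 / (1 - u) ^ 3)) = c"
  proof (rule Efun_alg[OF u S0])
    show "S\<^sup>2 = 1 - c\<^sup>2 * (((1 + u) / (1 - u))\<^sup>2 - 1) * (zf m \<rho>)\<^sup>2"
      unfolding SQ Q_def Qf_def \<rho>_def ..
    show "real m * ((1 + u) / (1 - u)) * zf m \<rho> + (((1 + u) / (1 - u))\<^sup>2 - 1) * zd m \<rho> = 1"
      using ode[OF \<rho>1] by (simp add: \<rho>_def)
  qed
  then show ?thesis
    unfolding G1_def G2_def \<rho>_def[symmetric] Phi_eq Phi1_eq by (simp add: \<rho>_def)
qed

end

theorem proposition1p2:
  fixes c :: real
  assumes m2: "CARD('m::finite) \<ge> 2"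
    and c_range: "1 - real CARD('m) \<le> c" "c \<le> real CARD('m) - 1"
  shows "smooth_on (ball 0 1) (f_fun CARD('m) c :: real^'m \<Rightarrow> real)
    \<and> (\<forall>p::real^('m option). base_pt p \<in> ball 0 1 \<longrightarrow>
          (\<exists>!d::real. p \<in> graph_set (\<lambda>x. f_fun CARD('m) c x + d)))
    \<and> (\<forall>d::real. \<forall>x::real^'m. x \<in> ball 0 1 \<longrightarrow>
          real CARD('m) *
            metric_inner prod_metric (graph_map (\<lambda>y. f_fun CARD('m) c y + d) x)
              (mean_curv_vec (\<lambda>y. f_fun CARD('m) c y + d) x)
              (graph_normal (\<lambda>y. f_fun CARD('m) c y + d) x) = c)"
proof -
  interpret crange "CARD('m)" c using m2 c_range by unfold_locales auto
  define K1 where "K1 = Ff CARD('m) c 1"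
  have feq: "f_fun CARD('m) c x = Gf CARD('m) c ((norm x)\<^sup>2) + (- K1)" if "norm x < 1" for x :: "real^'m"
    using f_fun_eq[OF that] by (simp add: K1_def)
  have P1: "smooth_on (ball 0 1) (f_fun CARD('m) c :: real^'m \<Rightarrow> real)"
  proof -
    have r1: "(\<lambda>x::real^'m. Gf CARD('m) c (norm x ^ 2)) \<in> msm {-1/3<..<1}"
      by (rule msm.rad[OF smooth_Gf])
    have r2: "(\<lambda>x::real^'m. (\<lambda>_. - K1) (norm x ^ 2)) \<in> msm {-1/3<..<1}"
      by (rule msm.rad[OF smooth1_const])
    have "(\<lambda>x::real^'m. Gf CARD('m) c (norm x ^ 2) + (- K1)) \<in> msm {-1/3<..<1}"
      using msm.add[OF r1 r2] by simp
    then have "smooth_on (ball 0 1) (\<lambda>x::real^'m. Gf CARD('m) c (norm x ^ 2) + (- K1))"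
      by (rule msm_smooth_on[rotated]) auto
    then show ?thesis by (rule smooth_on_cong) (auto simp: feq)
  qed
  have P2: "\<forall>p::real^('m option). base_pt p \<in> ball 0 1 \<longrightarrow>
          (\<exists>!d::real. p \<in> graph_set (\<lambda>x. f_fun CARD('m) c x + d))"
  proof (intro allI impI)
    fix p :: "real^('m option)" assume p: "base_pt p \<in> ball 0 1"
    have iff: "p \<in> graph_set (\<lambda>x. f_fun CARD('m) c x + d) \<longleftrightarrow> d = p $ None - f_fun CARD('m) c (base_pt p)" for d
    proof
      assume "p \<in> graph_set (\<lambda>x. f_fun CARD('m) c x + d)"
      then obtain x where "p = graph_map (\<lambda>x. f_fun CARD('m) c x + d) x" unfolding graph_set_def by auto
      then show "d = p $ None - f_fun CARD('m) c (base_pt p)" by simp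
    next
      assume d: "d = p $ None - f_fun CARD('m) c (base_pt p)"
      have "p = graph_map (\<lambda>x. f_fun CARD('m) c x + d) (base_pt p)"
        using d by (auto simp: vec_eq_iff base_pt_def graph_map_def split: option.split)
      then show "p \<in> graph_set (\<lambda>x. f_fun CARD('m) c x + d)" unfolding graph_set_def using p by blast
    qed
    show "\<exists>!d::real. p \<in> graph_set (\<lambda>x. f_fun CARD('m) c x + d)"
      unfolding iff by simp
  qed
  have P3: "real CARD('m) *
            metric_inner prod_metric (graph_map (\<lambda>y. f_fun CARD('m) c y + d) x)
              (mean_curv_vec (\<lambda>y. f_fun CARD('m) c y + d) x)
              (graph_normal (\<lambda>y. f_fun CARD('m) c y + d) x) = c"
    if x: "x \<in> ball 0 1" for d and x :: "real^'m"
  proof -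
    have a1: "f_fun CARD('m) c y + d = Gf CARD('m) c ((norm y)\<^sup>2) + (d - K1)" if "norm y < 1" for y :: "real^'m"
      using feq[OF that] by simp
    have a2: "(Gf CARD('m) c has_real_derivative G1 u) (at u)" if "0 \<le> u" "u < 1" for u
      using Gf_deriv that by simp
    have a3: "(G1 has_real_derivative G2 u) (at u)" if "0 \<le> u" "u < 1" for u
      using G1_deriv that by simp
    have gg: "geo (\<lambda>y::real^'m. f_fun CARD('m) c y + d) (Gf CARD('m) c) G1 G2 (d - K1)"
      unfolding geo_def using a1 a2 a3 by blast
    interpret g: geo "\<lambda>y::real^'m. f_fun CARD('m) c y + d" "Gf CARD('m) c" G1 G2 "d - K1"
      by (rule gg)
    have nx: "norm x < 1" using x by simp
    have "real CARD('m) * metric_inner prod_metric (graph_map (\<lambda>y. f_fun CARD('m) c y + d) x)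
              (mean_curv_vec (\<lambda>y. f_fun CARD('m) c y + d) x) (graph_normal (\<lambda>y. f_fun CARD('m) c y + d) x)
        = Efun (real CARD('m)) ((norm x)\<^sup>2) (G1 ((norm x)\<^sup>2)) (G2 ((norm x)\<^sup>2))"
      by (rule g.geo_main[OF nx])
    also have "\<dots> = c" by (rule Efun_c) (use normsq_lt1[OF nx] in auto)
    finally show ?thesis .
  qed
  show ?thesis using P1 P2 P3 by blast
qed


end
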